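(* Let $k\geq 2$ and let $G$ be a graph of order $n\geq 8k^2-3k$ that does not contain $k\cdot P_3$ as a subgraph. Then $\rho(G)\leq \rho(F_{n,k})$, with equality if and only if $G=F_{n,k}$.
   Context: Graphs are finite and simple; $\rho(G)$ is the largest eigenvalue of the adjacency matrix of $G$. $P_3$ is the path on 3 vertices and $k\cdot P_3$ is the disjoint union of $k$ copies of $P_3$. $G\vee H$ is the join and $G\cup H$ the disjoint union of vertex-disjoint graphs; $pK_2$ is the disjoint union of $p$ edges. Writing $n-(k-1)=2p+s$ with integers $p\geq 0$ and $0\leq s<2$, $F_{n,k}=K_{k-1}\vee(pK_2\cup K_s)$. *)

theory Defs
  imports Complex_Main
begin

definition simple_graph :: "'a set \<Rightarrow> 'a set set \<Rightarrow> bool" where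
  "simple_graph V E \<longleftrightarrow> finite V \<and> (\<forall>e\<in>E. e \<subseteq> V \<and> card e = 2)"

definition adj :: "'a set set \<Rightarrow> 'a \<Rightarrow> 'a \<Rightarrow> real" where
  "adj E u v = (if {u, v} \<in> E then 1 else 0)"

text \<open>Real eigenvalues of the adjacency matrix (indexed by V).
  The adjacency matrix is real symmetric, so all its eigenvalues are real.\<close>
definition adj_eigenvalues :: "'a set \<Rightarrow> 'a set set \<Rightarrow> real set" where
  "adj_eigenvalues V E =
     {mu. \<exists>x :: 'a \<Rightarrow> real. (\<exists>v\<in>V. x v \<noteq> 0) \<and>
          (\<forall>v\<in>V. (\<Sum>u\<in>V. adj E v u * x u) = mu * x v)}"

definition spectral_radius :: "'a set \<Rightarrow> 'a set set \<Rightarrow> real" where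
  "spectral_radius V E = Max (adj_eigenvalues V E)"

definition contains_subgraph ::
  "'a set \<Rightarrow> 'a set set \<Rightarrow> 'b set \<Rightarrow> 'b set set \<Rightarrow> bool" where
  "contains_subgraph V E VH EH \<longleftrightarrow>
     (\<exists>f. inj_on f VH \<and> f ` VH \<subseteq> V \<and> (\<forall>e\<in>EH. f ` e \<in> E))"

definition graph_iso ::
  "'a set \<Rightarrow> 'a set set \<Rightarrow> 'b set \<Rightarrow> 'b set set \<Rightarrow> bool" where
  "graph_iso V E W F \<longleftrightarrow>
     (\<exists>f. bij_betw f V W \<and> (\<forall>u\<in>V. \<forall>v\<in>V. {u, v} \<in> E \<longleftrightarrow> {f u, f v} \<in> F))"

definition kP3_verts :: "nat \<Rightarrow> (nat \<times> nat) set" where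
  "kP3_verts k = {0..<k} \<times> {0, 1, 2}"

definition kP3_edges :: "nat \<Rightarrow> (nat \<times> nat) set set" where
  "kP3_edges k = (\<Union>i\<in>{0..<k}. {{(i, 0), (i, 1)}, {(i, 1), (i, 2)}})"

text \<open>F_{n,k} = K_{k-1} join (p K_2 union K_s), where n-(k-1) = 2p+s, 0<=s<2.
  Vertex set {0..<n}; vertices 0..k-2 form K_{k-1}; the remaining vertices
  k-1+2j, k-1+2j+1 (j<p) form the p edges; if s = 1 vertex n-1 is the extra
  isolated vertex of the second part.\<close>
definition F_verts :: "nat \<Rightarrow> nat set" where
  "F_verts n = {0..<n}"

definition F_edges :: "nat \<Rightarrow> nat \<Rightarrow> nat set set" where
  "F_edges n k = {{u, v} | u v. u < n \<and> v < n \<and> u \<noteq> v \<and>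
      (u < k - 1 \<or> v < k - 1 \<or>
       (u - (k - 1)) div 2 = (v - (k - 1)) div 2)}"

end

theory Submission
  imports Defs "HOL-Analysis.Analysis"
begin

definition Qf :: "'a set \<Rightarrow> ('a \<Rightarrow> 'a \<Rightarrow> real) \<Rightarrow> ('a \<Rightarrow> real) \<Rightarrow> real" where
  "Qf V a x = (\<Sum>u\<in>V. \<Sum>v\<in>V. a u v * x u * x v)"

definition Nf :: "'a set \<Rightarrow> ('a \<Rightarrow> real) \<Rightarrow> real" where
  "Nf V x = (\<Sum>v\<in>V. (x v)^2)"

lemma Qf_restrict: "Qf V a (restrict x V) = Qf V a x"
  unfolding Qf_def by (intro sum.cong refl) auto

lemma Nf_restrict: "Nf V (restrict x V) = Nf V x"
  unfolding Nf_def by (intro sum.cong refl) auto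

lemma exists_max:
  assumes "finite V" "V \<noteq> {}"
  shows "\<exists>x. Nf V x = 1 \<and> (\<forall>y. Nf V y = 1 \<longrightarrow> Qf V a y \<le> Qf V a x)"
proof -
  let ?X = "product_topology (\<lambda>_. euclideanreal) V"
  let ?C = "{x \<in> topspace ?X. Nf V x \<in> {1}}"
  have cQ: "continuous_map ?X euclideanreal (Qf V a)"
    unfolding Qf_def
    by (intro continuous_map_sum assms continuous_map_real_mult continuous_map_const[THEN iffD2]
          continuous_map_product_projection) auto
  have cN: "continuous_map ?X euclideanreal (Nf V)"
    unfolding Nf_def power2_eq_square
    by (intro continuous_map_sum assms continuous_map_real_mult continuous_map_product_projection) auto
  have clo: "closedin ?X ?C"
    by (rule closedin_continuous_map_preimage[OF cN]) auto
  have cpt0: "compactin ?X (PiE V (\<lambda>_. {-1..1}))"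
    by (simp add: compactin_PiE)
  have sub: "?C \<subseteq> PiE V (\<lambda>_. {-1..1})"
  proof
    fix x assume "x \<in> ?C"
    then have x: "x \<in> extensional V" "Nf V x = 1" by (auto simp: PiE_iff)
    have "\<bar>x v\<bar> \<le> 1" if "v \<in> V" for v
    proof -
      have "(x v)^2 \<le> Nf V x" unfolding Nf_def
        using that assms(1) by (intro member_le_sum) auto
      then have "(x v)^2 \<le> 1^2" using x by simp
      then show ?thesis using abs_le_square_iff by (metis abs_one)
    qed
    then show "x \<in> PiE V (\<lambda>_. {-1..1})" using x by (auto simp: PiE_iff abs_le_iff)
  qed
  have cpt: "compactin ?X ?C" by (rule closed_compactin[OF cpt0 sub clo])
  have "compactin euclideanreal (Qf V a ` ?C)" by (rule image_compactin[OF cpt cQ])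
  then have cmp: "compact (Qf V a ` ?C)" by simp
  obtain w where w: "w \<in> V" using assms by auto
  define e where "e = restrict (\<lambda>v. if v = w then 1 else (0::real)) V"
  have "(\<Sum>v\<in>V. (if v = w then 1 else 0::real)^2) = (\<Sum>v\<in>V. if v = w then 1 else 0)"
    by (rule sum.cong) auto
  then have "Nf V e = 1" unfolding e_def Nf_restrict unfolding Nf_def
    using assms w by simp
  then have "e \<in> ?C" unfolding e_def by auto
  then have ne: "Qf V a ` ?C \<noteq> {}" by auto
  obtain s where s: "s \<in> Qf V a ` ?C" "\<forall>t\<in>Qf V a ` ?C. t \<le> s"
    using compact_attains_sup[OF cmp ne] by blast
  then obtain x where x: "x \<in> ?C" "s = Qf V a x" by auto
  show ?thesis
  proof (intro exI[of _ x] conjI allI impI)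
    show "Nf V x = 1" using x by auto
    fix y assume y: "Nf V y = 1"
    have "restrict y V \<in> ?C" using y by (auto simp: Nf_restrict)
    then have "Qf V a (restrict y V) \<le> s" using s by auto
    then show "Qf V a y \<le> Qf V a x" using x by (simp add: Qf_restrict)
  qed
qed

definition symm :: "'a set \<Rightarrow> ('a \<Rightarrow> 'a \<Rightarrow> real) \<Rightarrow> bool" where
  "symm V a \<longleftrightarrow> (\<forall>u\<in>V. \<forall>v\<in>V. a u v = a v u)"

lemma Qf_add:
  assumes "symm V a"
  shows "Qf V a (\<lambda>v. x v + t * y v) =
    Qf V a x + 2 * t * (\<Sum>v\<in>V. y v * (\<Sum>u\<in>V. a v u * x u)) + t^2 * Qf V a y"
proof -
  have e1: "(\<Sum>u\<in>V. \<Sum>v\<in>V. a u v * x u * y v) = (\<Sum>v\<in>V. y v * (\<Sum>u\<in>V. a v u * x u))"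
    apply (subst sum.swap)
    apply (simp add: sum_distrib_left)
    apply (intro sum.cong refl)
    using assms unfolding symm_def by (auto simp: algebra_simps)
  have e2: "(\<Sum>u\<in>V. \<Sum>v\<in>V. a u v * y u * x v) = (\<Sum>v\<in>V. y v * (\<Sum>u\<in>V. a v u * x u))"
    by (simp add: sum_distrib_left algebra_simps)
  have "Qf V a (\<lambda>v. x v + t * y v) = (\<Sum>u\<in>V. \<Sum>v\<in>V. a u v * x u * x v + t * (a u v * x u * y v)
      + t * (a u v * y u * x v) + t^2 * (a u v * y u * y v))"
    unfolding Qf_def by (intro sum.cong refl) (simp add: algebra_simps power2_eq_square)
  also have "\<dots> = Qf V a x + t * (\<Sum>u\<in>V. \<Sum>v\<in>V. a u v * x u * y v)
      + t * (\<Sum>u\<in>V. \<Sum>v\<in>V. a u v * y u * x v) + t^2 * Qf V a y"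
    unfolding Qf_def by (simp add: sum.distrib sum_distrib_left)
  finally show ?thesis using e1 e2 by simp
qed

lemma Nf_add:
  "Nf V (\<lambda>v. x v + t * y v) = Nf V x + 2 * t * (\<Sum>v\<in>V. y v * x v) + t^2 * Nf V y"
proof -
  have "Nf V (\<lambda>v. x v + t * y v) = (\<Sum>v\<in>V. (x v)^2 + 2 * t * (y v * x v) + t^2 * (y v)^2)"
    unfolding Nf_def by (intro sum.cong refl) (simp add: algebra_simps power2_eq_square)
  then show ?thesis unfolding Nf_def by (simp add: sum.distrib sum_distrib_left)
qed

lemma quad_nonneg_lin0:
  fixes c d :: real
  assumes "\<forall>t. c * t + d * t^2 \<ge> 0"
  shows "c = 0"
proof (rule ccontr)
  assume c: "c \<noteq> 0"
  define s where "s = 1 / (\<bar>d\<bar> + 1)"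
  have s0: "s > 0" unfolding s_def by (simp add: add_pos_nonneg)
  have "c * (- c * s) + d * (- c * s)^2 \<ge> 0" using assms by blast
  then have "c^2 * s * (d * s - 1) \<ge> 0" by (simp add: algebra_simps power2_eq_square)
  moreover have "c^2 * s > 0" using c s0 by simp
  ultimately have "d * s - 1 \<ge> 0" using zero_le_mult_iff by (metis not_le)
  moreover have "d * s < 1" unfolding s_def by (cases "d \<ge> 0") (auto simp: divide_simps)
  ultimately show False by simp
qed

lemma variational:
  assumes sym: "symm V a" and fin: "finite V"
    and le: "\<forall>y. Qf V a y \<le> lam * Nf V y" and x: "Nf V x = 1" "Qf V a x = lam"
  shows "\<forall>w\<in>V. (\<Sum>u\<in>V. a w u * x u) = lam * x w"
proof
  fix w assume w: "w \<in> V"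
  define y where "y = (\<lambda>v. if v = w then 1 else (0::real))"
  have dl: "(\<Sum>v\<in>V. y v * F v) = F w" for F :: "'a \<Rightarrow> real"
  proof -
    have "(\<Sum>v\<in>V. y v * F v) = (\<Sum>v\<in>V. if v = w then F v else 0)"
      by (rule sum.cong) (auto simp: y_def)
    then show ?thesis using fin w by simp
  qed
  have s1: "(\<Sum>v\<in>V. y v * (\<Sum>u\<in>V. a v u * x u)) = (\<Sum>u\<in>V. a w u * x u)"
    by (rule dl)
  have s2: "(\<Sum>v\<in>V. y v * x v) = x w" by (rule dl)
  have "\<forall>t. (2 * (lam * x w - (\<Sum>u\<in>V. a w u * x u))) * t + (lam * Nf V y - Qf V a y) * t^2 \<ge> 0"
  proof
    fix t
    have "Qf V a (\<lambda>v. x v + t * y v) \<le> lam * Nf V (\<lambda>v. x v + t * y v)" using le by blast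
    then show "(2 * (lam * x w - (\<Sum>u\<in>V. a w u * x u))) * t + (lam * Nf V y - Qf V a y) * t^2 \<ge> 0"
      unfolding Qf_add[OF sym] Nf_add s1 s2 x by (simp add: algebra_simps)
  qed
  from quad_nonneg_lin0[OF this] show "(\<Sum>u\<in>V. a w u * x u) = lam * x w" by simp
qed

lemma Nf_nonneg: "Nf V x \<ge> 0" unfolding Nf_def by (simp add: sum_nonneg)

lemma Nf_zero:
  assumes "finite V" "Nf V x = 0" "v \<in> V" shows "x v = 0"
proof -
  have "(x v)^2 = 0" using assms unfolding Nf_def
    by (subst (asm) sum_nonneg_eq_0_iff) auto
  then show ?thesis by simp
qed

lemma Qf_scale: "Qf V a (\<lambda>v. c * x v) = c^2 * Qf V a x"
  unfolding Qf_def by (simp add: sum_distrib_left power2_eq_square algebra_simps)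

lemma Nf_scale: "Nf V (\<lambda>v. c * x v) = c^2 * Nf V x"
  unfolding Nf_def by (simp add: sum_distrib_left power2_eq_square algebra_simps)

lemma max_all:
  assumes fin: "finite V" and mx: "Nf V x = 1" "\<forall>y. Nf V y = 1 \<longrightarrow> Qf V a y \<le> Qf V a x"
  shows "Qf V a y \<le> Qf V a x * Nf V y"
proof (cases "Nf V y = 0")
  case True
  then have "\<forall>v\<in>V. y v = 0" using Nf_zero[OF fin] by blast
  then have "Qf V a y = 0" unfolding Qf_def by simp
  then show ?thesis using True by simp
next
  case False
  then have p: "Nf V y > 0" using Nf_nonneg[of V y] by simp
  define c where "c = 1 / sqrt (Nf V y)"
  have c2: "c^2 = 1 / Nf V y" unfolding c_def using p by (simp add: power_divide)
  have "Nf V (\<lambda>v. c * y v) = 1" unfolding Nf_scale c2 using p by simp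
  then have "Qf V a (\<lambda>v. c * y v) \<le> Qf V a x" using mx by blast
  then have "Qf V a y / Nf V y \<le> Qf V a x" unfolding Qf_scale c2 by simp
  then show ?thesis using p by (simp add: divide_simps mult.commute)
qed

definition indep :: "'i set \<Rightarrow> 'a set \<Rightarrow> ('i \<Rightarrow> 'a \<Rightarrow> real) \<Rightarrow> bool" where
  "indep I V g \<longleftrightarrow> (\<forall>c. (\<forall>v\<in>V. (\<Sum>i\<in>I. c i * g i v) = 0) \<longrightarrow> (\<forall>i\<in>I. c i = 0))"

lemma indep_card:
  assumes "finite V" "finite I" "indep I V g"
  shows "card I \<le> card V"
  using assms
proof (induction V arbitrary: I g rule: finite_induct)
  case empty
  then have "\<forall>i\<in>I. (1::real) = 0"
    unfolding indep_def by (drule_tac x="\<lambda>_. 1::real" in spec) simp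
  then have "I = {}" by auto
  then show ?case by simp
next
  case (insert w F)
  show ?case
  proof (cases "\<forall>i\<in>I. g i w = 0")
    case True
    have "indep I F g" unfolding indep_def
    proof (intro allI impI)
      fix c assume h: "\<forall>v\<in>F. (\<Sum>i\<in>I. c i * g i v) = 0"
      have "\<forall>v\<in>insert w F. (\<Sum>i\<in>I. c i * g i v) = 0" using h True by auto
      then show "\<forall>i\<in>I. c i = 0" using insert.prems(2) unfolding indep_def by blast
    qed
    then have "card I \<le> card F" using insert.IH insert.prems(1) by blast
    then show ?thesis using insert.hyps by simp
  next
    case False
    then obtain j where j: "j \<in> I" "g j w \<noteq> 0" by blast
    define g' where "g' i v = g i v - (g i w / g j w) * g j v" for i v
    have "indep (I - {j}) F g'" unfolding indep_def
    proof (intro allI impI)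
      fix c assume h: "\<forall>v\<in>F. (\<Sum>i\<in>I - {j}. c i * g' i v) = 0"
      define c' where "c' i = (if i = j then - (\<Sum>i\<in>I - {j}. c i * g i w) / g j w else c i)" for i
      have eq: "(\<Sum>i\<in>I. c' i * g i v) = (\<Sum>i\<in>I - {j}. c i * g' i v)" for v
      proof -
        have r1: "(\<Sum>i\<in>I. c' i * g i v) = c' j * g j v + (\<Sum>i\<in>I - {j}. c' i * g i v)"
          using j insert.prems(1) by (simp add: sum.remove)
        have r2: "(\<Sum>i\<in>I - {j}. c' i * g i v) = (\<Sum>i\<in>I - {j}. c i * g i v)"
          by (rule sum.cong) (auto simp: c'_def)
        have r3: "(\<Sum>i\<in>I - {j}. c i * g' i v) = (\<Sum>i\<in>I - {j}. c i * g i v)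
              - (\<Sum>i\<in>I - {j}. c i * g i w) / g j w * g j v"
        proof -
          have "(\<Sum>i\<in>I - {j}. c i * g' i v) = (\<Sum>i\<in>I - {j}. c i * g i v - (c i * g i w) * (g j v / g j w))"
            unfolding g'_def by (rule sum.cong) (auto simp: algebra_simps)
          also have "\<dots> = (\<Sum>i\<in>I - {j}. c i * g i v) - (\<Sum>i\<in>I - {j}. c i * g i w) * (g j v / g j w)"
            by (simp add: sum_subtractf sum_distrib_right del: times_divide_eq_right)
          finally show ?thesis by simp
        qed
        show ?thesis unfolding r1 r2 r3 by (simp add: c'_def)
      qed
      have gw: "g' i w = 0" for i unfolding g'_def using j by simp
      have "\<forall>v\<in>insert w F. (\<Sum>i\<in>I. c' i * g i v) = 0"
        using h gw by (auto simp: eq)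
      then have "\<forall>i\<in>I. c' i = 0" using insert.prems(2) unfolding indep_def by blast
      then show "\<forall>i\<in>I - {j}. c i = 0" unfolding c'_def by (metis DiffE singletonI)
    qed
    then have "card (I - {j}) \<le> card F" using insert.IH insert.prems(1) by blast
    then show ?thesis using insert.hyps insert.prems(1) j by (simp add: card_Diff_singleton)
  qed
qed

lemma Qf_eigen:
  assumes "\<forall>v\<in>V. (\<Sum>u\<in>V. a v u * x u) = mu * x v"
  shows "Qf V a x = mu * Nf V x"
proof -
  have "Qf V a x = (\<Sum>u\<in>V. x u * (\<Sum>v\<in>V. a u v * x v))"
    unfolding Qf_def by (simp add: sum_distrib_left algebra_simps)
  also have "\<dots> = (\<Sum>u\<in>V. x u * (mu * x u))" using assms by simp
  finally show ?thesis unfolding Nf_def by (simp add: sum_distrib_left power2_eq_square algebra_simps)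
qed

lemma eigen_orth:
  assumes sym: "symm V a"
    and x: "\<forall>v\<in>V. (\<Sum>u\<in>V. a v u * x u) = mu * x v"
    and y: "\<forall>v\<in>V. (\<Sum>u\<in>V. a v u * y u) = nu * y v"
    and "mu \<noteq> nu"
  shows "(\<Sum>v\<in>V. x v * y v) = 0"
proof -
  have "mu * (\<Sum>v\<in>V. x v * y v) = (\<Sum>v\<in>V. (\<Sum>u\<in>V. a v u * x u) * y v)"
    using x by (simp add: sum_distrib_left algebra_simps)
  also have "\<dots> = (\<Sum>v\<in>V. \<Sum>u\<in>V. a v u * x u * y v)" by (simp add: sum_distrib_right)
  also have "\<dots> = (\<Sum>u\<in>V. \<Sum>v\<in>V. a v u * x u * y v)" by (rule sum.swap)
  also have "\<dots> = (\<Sum>u\<in>V. x u * (\<Sum>v\<in>V. a u v * y v))"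
    using sym unfolding symm_def by (simp add: sum_distrib_left algebra_simps)
  also have "\<dots> = nu * (\<Sum>v\<in>V. x v * y v)"
    using y by (simp add: sum_distrib_left algebra_simps)
  finally show ?thesis using assms(4) by simp
qed

definition eigs :: "'a set \<Rightarrow> ('a \<Rightarrow> 'a \<Rightarrow> real) \<Rightarrow> real set" where
  "eigs V a = {mu. \<exists>x. (\<exists>v\<in>V. x v \<noteq> 0) \<and> (\<forall>v\<in>V. (\<Sum>u\<in>V. a v u * x u) = mu * x v)}"

lemma Nf_pos: "finite V \<Longrightarrow> v \<in> V \<Longrightarrow> x v \<noteq> 0 \<Longrightarrow> Nf V x > 0"
  using Nf_zero Nf_nonneg by (metis less_eq_real_def)

lemma eigs_finite:
  assumes fin: "finite V" and sym: "symm V a"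
  shows "finite (eigs V a)"
proof (rule ccontr)
  assume "infinite (eigs V a)"
  then obtain S where S: "S \<subseteq> eigs V a" "finite S" "card S = Suc (card V)"
    using infinite_arbitrarily_large by blast
  define g where "g mu = (SOME x. (\<exists>v\<in>V. x v \<noteq> 0) \<and> (\<forall>v\<in>V. (\<Sum>u\<in>V. a v u * x u) = mu * x v))" for mu
  have g: "(\<exists>v\<in>V. g mu v \<noteq> 0) \<and> (\<forall>v\<in>V. (\<Sum>u\<in>V. a v u * g mu u) = mu * g mu v)" if "mu \<in> S" for mu
  proof -
    have "\<exists>x. (\<exists>v\<in>V. x v \<noteq> 0) \<and> (\<forall>v\<in>V. (\<Sum>u\<in>V. a v u * x u) = mu * x v)"
      using S(1) that unfolding eigs_def by blast
    then show ?thesis unfolding g_def by (rule someI_ex)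
  qed
  have "indep S V g" unfolding indep_def
  proof (intro allI impI ballI)
    fix c nu assume h: "\<forall>v\<in>V. (\<Sum>mu\<in>S. c mu * g mu v) = 0" and nu: "nu \<in> S"
    have "0 = (\<Sum>v\<in>V. (\<Sum>mu\<in>S. c mu * g mu v) * g nu v)" using h by simp
    also have "\<dots> = (\<Sum>mu\<in>S. c mu * (\<Sum>v\<in>V. g mu v * g nu v))"
      apply (simp add: sum_distrib_right sum_distrib_left)
      apply (subst sum.swap)
      apply (simp add: algebra_simps)
      done
    also have "\<dots> = (\<Sum>mu\<in>S. if mu = nu then c nu * Nf V (g nu) else 0)"
    proof (rule sum.cong[OF refl])
      fix mu assume mu: "mu \<in> S"
      show "c mu * (\<Sum>v\<in>V. g mu v * g nu v) = (if mu = nu then c nu * Nf V (g nu) else 0)"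
      proof (cases "mu = nu")
        case True then show ?thesis unfolding Nf_def by (simp add: power2_eq_square)
      next
        case False
        then show ?thesis using eigen_orth[OF sym conjunct2[OF g[OF mu]] conjunct2[OF g[OF nu]]] by simp
      qed
    qed
    also have "\<dots> = c nu * Nf V (g nu)" using S(2) nu by simp
    finally have "c nu * Nf V (g nu) = 0" by simp
    moreover have "Nf V (g nu) > 0" using g[OF nu] Nf_pos[OF fin] by blast
    ultimately show "c nu = 0" by simp
  qed
  then have "card S \<le> card V" using indep_card fin S(2) by blast
  then show False using S(3) by simp
qed

lemma symm_adj: "symm V (adj E)"
  unfolding symm_def adj_def by (simp add: insert_commute)

lemma adj_nonneg: "adj E u v \<ge> 0"
  unfolding adj_def by simp

lemma Qf_abs_ge:
  assumes "\<forall>u v. a u v \<ge> 0"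
  shows "Qf V a x \<le> Qf V a (\<lambda>v. \<bar>x v\<bar>)"
  unfolding Qf_def
proof (rule sum_mono)
  fix u
  have "a u v * x u * x v \<le> a u v * \<bar>x u\<bar> * \<bar>x v\<bar>" for v
  proof -
    have "x u * x v \<le> \<bar>x u\<bar> * \<bar>x v\<bar>" by (metis abs_ge_self abs_mult)
    then show ?thesis using assms mult_left_mono by (metis mult.assoc)
  qed
  then show "(\<Sum>v\<in>V. a u v * x u * x v) \<le> (\<Sum>v\<in>V. a u v * \<bar>x u\<bar> * \<bar>x v\<bar>)"
    by (intro sum_mono)
qed

lemma spec_rad:
  assumes fin: "finite V" and ne: "V \<noteq> {}"
  shows "\<forall>y. Qf V (adj E) y \<le> spectral_radius V E * Nf V y"
    and "\<exists>x. (\<forall>v. x v \<ge> 0) \<and> Nf V x = 1 \<and>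
          (\<forall>w\<in>V. (\<Sum>u\<in>V. adj E w u * x u) = spectral_radius V E * x w)"
proof -
  obtain x where x: "Nf V x = 1" "\<forall>y. Nf V y = 1 \<longrightarrow> Qf V (adj E) y \<le> Qf V (adj E) x"
    using exists_max[OF fin ne] by blast
  define lam where "lam = Qf V (adj E) x"
  have le: "\<forall>y. Qf V (adj E) y \<le> lam * Nf V y" unfolding lam_def using max_all[OF fin x] by blast
  define x' where "x' = (\<lambda>v. \<bar>x v\<bar>)"
  have n': "Nf V x' = 1" using x unfolding x'_def Nf_def by simp
  have "Qf V (adj E) x \<le> Qf V (adj E) x'" unfolding x'_def by (rule Qf_abs_ge) (simp add: adj_nonneg)
  moreover have "Qf V (adj E) x' \<le> lam" using le n' by (metis mult.right_neutral)
  ultimately have q': "Qf V (adj E) x' = lam" unfolding lam_def by simp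
  have ev: "\<forall>w\<in>V. (\<Sum>u\<in>V. adj E w u * x' u) = lam * x' w"
    by (rule variational[OF symm_adj fin le n' q'])
  have "\<exists>v\<in>V. x' v \<noteq> 0"
  proof (rule ccontr)
    assume "\<not> (\<exists>v\<in>V. x' v \<noteq> 0)"
    then have "Nf V x' = 0" unfolding Nf_def by simp
    then show False using n' by simp
  qed
  then have lin: "lam \<in> adj_eigenvalues V E" unfolding adj_eigenvalues_def using ev by blast
  have ub: "mu \<le> lam" if mu: "mu \<in> adj_eigenvalues V E" for mu
  proof -
    obtain y v where y: "v \<in> V" "y v \<noteq> 0" "\<forall>v\<in>V. (\<Sum>u\<in>V. adj E v u * y u) = mu * y v"
      using mu unfolding adj_eigenvalues_def mem_Collect_eq by blast
    have "Qf V (adj E) y = mu * Nf V y" by (rule Qf_eigen[OF y(3)])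
    moreover have "Nf V y > 0" using Nf_pos[of V v y] fin y(1,2) by blast
    ultimately show ?thesis using le by (metis mult_le_cancel_right not_less)
  qed
  have "finite (adj_eigenvalues V E)"
    using eigs_finite[OF fin symm_adj] unfolding eigs_def adj_eigenvalues_def .
  then have sr: "spectral_radius V E = lam" unfolding spectral_radius_def
    using lin ub by (intro Max_eqI) auto
  show "\<forall>y. Qf V (adj E) y \<le> spectral_radius V E * Nf V y" using le sr by simp
  show "\<exists>x. (\<forall>v. x v \<ge> 0) \<and> Nf V x = 1 \<and>
          (\<forall>w\<in>V. (\<Sum>u\<in>V. adj E w u * x u) = spectral_radius V E * x w)"
    using ev n' sr by (intro exI[of _ x']) (auto simp: x'_def)
qed


definition nbr :: "'a set set \<Rightarrow> 'a set \<Rightarrow> 'a \<Rightarrow> 'a set" where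
  "nbr E V v = {u\<in>V. {v, u} \<in> E}"

definition emb :: "'a set set \<Rightarrow> 'a set \<Rightarrow> nat \<Rightarrow> (nat \<times> nat \<Rightarrow> 'a) \<Rightarrow> bool" where
  "emb E X j f \<longleftrightarrow> inj_on f (kP3_verts j) \<and> f ` kP3_verts j \<subseteq> X \<and> (\<forall>e\<in>kP3_edges j. f ` e \<in> E)"

lemma kP3_verts_Suc: "kP3_verts (Suc j) = kP3_verts j \<union> {(j,0),(j,1),(j,2)}"
  unfolding kP3_verts_def by auto

lemma kP3_edges_Suc: "kP3_edges (Suc j) = kP3_edges j \<union> {{(j,0),(j,1)},{(j,1),(j,2)}}"
  unfolding kP3_edges_def by (auto simp: atLeastLessThanSuc)

lemma kP3_verts_fst: "p \<in> kP3_verts j \<Longrightarrow> fst p < j"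
  unfolding kP3_verts_def by auto

lemma kP3_edges_sub: "e \<in> kP3_edges j \<Longrightarrow> e \<subseteq> kP3_verts j"
  unfolding kP3_edges_def kP3_verts_def by auto

lemma finite_kP3_verts: "finite (kP3_verts j)"
  unfolding kP3_verts_def by auto

lemma card_kP3_verts: "card (kP3_verts j) = 3 * j"
  unfolding kP3_verts_def by (simp add: card_cartesian_product)

lemma card_emb_image: "card (f ` kP3_verts j) \<le> 3 * j"
  using card_image_le[OF finite_kP3_verts, of f j] card_kP3_verts by simp

lemma emb_0: "emb E X 0 f"
  unfolding emb_def kP3_verts_def kP3_edges_def by auto

lemma emb_mono: "emb E X j f \<Longrightarrow> X \<subseteq> Y \<Longrightarrow> emb E Y j f"
  unfolding emb_def by auto

lemma emb_ext:
  assumes f: "emb E X j f"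
    and abc: "a \<in> X" "b \<in> X" "c \<in> X"
    and nimg: "a \<notin> f ` kP3_verts j" "b \<notin> f ` kP3_verts j" "c \<notin> f ` kP3_verts j"
    and dist: "a \<noteq> b" "a \<noteq> c" "b \<noteq> c"
    and ed: "{c, a} \<in> E" "{c, b} \<in> E"
  shows "emb E X (Suc j) (f((j,0) := a, (j,1) := c, (j,2) := b))"
proof -
  let ?g = "f((j,0) := a, (j,1) := c, (j,2) := b)"
  have agree: "?g p = f p" if "p \<in> kP3_verts j" for p
    using kP3_verts_fst[OF that] by auto
  have img: "?g ` kP3_verts j = f ` kP3_verts j" using agree by (rule image_cong[OF refl])
  have img2: "?g ` {(j,0),(j,1),(j,2)} = {a, c, b}" by auto
  have inj1: "inj_on ?g (kP3_verts j)" using f agree unfolding emb_def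
    by (simp add: inj_on_def)
  have inj2: "inj_on ?g {(j,0),(j,1),(j,2)}" using dist by (auto simp: inj_on_def)
  have disj: "?g ` kP3_verts j \<inter> ?g ` {(j,0),(j,1),(j,2)} = {}"
    using nimg img img2 by auto
  have inj: "inj_on ?g (kP3_verts (Suc j))"
  proof (rule inj_onI)
    fix p q assume p: "p \<in> kP3_verts (Suc j)" and q: "q \<in> kP3_verts (Suc j)" and eq: "?g p = ?g q"
    let ?O = "kP3_verts j" and ?N = "{(j,0),(j,1),(j,2)}"
    have pq: "p \<in> ?O \<or> p \<in> ?N" "q \<in> ?O \<or> q \<in> ?N" using p q unfolding kP3_verts_Suc by auto
    show "p = q"
    proof (cases "p \<in> ?O")
      case pO: True
      show ?thesis
      proof (cases "q \<in> ?O")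
        case True then show ?thesis using pO eq inj1 by (meson inj_onD)
      next
        case False
        then have "q \<in> ?N" using pq by blast
        then have "?g q \<in> ?g ` ?N" by (rule imageI)
        moreover have "?g p \<in> ?g ` ?O" using pO by (rule imageI)
        ultimately show ?thesis using disj eq by (metis disjoint_iff)
      qed
    next
      case pN: False
      then have pN': "p \<in> ?N" using pq by blast
      show ?thesis
      proof (cases "q \<in> ?O")
        case True
        then have "?g q \<in> ?g ` ?O" by (rule imageI)
        moreover have "?g p \<in> ?g ` ?N" using pN' by (rule imageI)
        ultimately show ?thesis using disj eq by (metis disjoint_iff)
      next
        case False
        then have "q \<in> ?N" using pq by blast
        then show ?thesis using pN' eq inj2 by (meson inj_onD)
      qed
    qed
  qed
  have sub: "?g ` kP3_verts (Suc j) \<subseteq> X"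
    unfolding kP3_verts_Suc image_Un img img2 using f abc unfolding emb_def by auto
  have edges: "\<forall>e\<in>kP3_edges (Suc j). ?g ` e \<in> E"
  proof
    fix e assume "e \<in> kP3_edges (Suc j)"
    then consider "e \<in> kP3_edges j" | "e = {(j,0),(j,1)}" | "e = {(j,1),(j,2)}"
      unfolding kP3_edges_Suc by auto
    then show "?g ` e \<in> E"
    proof cases
      case 1
      have ag: "\<And>p. p \<in> e \<Longrightarrow> ?g p = f p" using agree kP3_edges_sub[OF 1] by blast
      have "?g ` e = f ` e" by (rule image_cong[OF refl ag])
      then show ?thesis using f 1 unfolding emb_def by auto
    next
      case 2 then show ?thesis using ed by (simp add: insert_commute)
    next
      case 3 then show ?thesis using ed by (simp add: insert_commute)
    qed
  qed
  show ?thesis unfolding emb_def using inj sub edges by blast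
qed

lemma two_elems:
  assumes "finite A" "card A \<ge> 2"
  obtains a b where "a \<in> A" "b \<in> A" "a \<noteq> b"
proof -
  from assms have "A \<noteq> {}" by auto
  then obtain a where a: "a \<in> A" by auto
  have c1: "card (A - {a}) \<ge> 1" using assms a by (simp add: card_Diff_singleton)
  have "A - {a} \<noteq> {}"
  proof
    assume h: "A - {a} = {}"
    have "card (A - {a}) = 0" unfolding h by simp
    then show False using c1 by simp
  qed
  then obtain b where "b \<in> A - {a}" by auto
  then show ?thesis using a that by auto
qed

lemma nbr_sub: "nbr E V v \<subseteq> V" unfolding nbr_def by auto

lemma nbr_self:
  assumes "\<forall>e\<in>E. card e = 2" shows "v \<notin> nbr E V v"
  using assms unfolding nbr_def by auto

lemma greedy:
  assumes fin: "finite V" and simp: "\<forall>e\<in>E. card e = 2"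
    and C: "finite C" "C \<subseteq> V"
    and f: "emb E (V - C) j f"
    and deg: "\<forall>c\<in>C. 3 * (j + card C) \<le> card (nbr E V c) + 1"
  shows "\<exists>g. emb E V (j + card C) g"
  using C f deg
proof (induction C arbitrary: j f rule: finite_induct)
  case empty
  then show ?case by auto
next
  case (insert c C')
  let ?I = "f ` kP3_verts j"
  define A where "A = nbr E V c - ?I - C'"
  have finA: "finite A" by (rule finite_subset[OF _ fin]) (auto simp: A_def nbr_def)
  have cI: "card ?I \<le> 3 * j" by (rule card_emb_image)
  have "card (nbr E V c) \<le> card A + card ?I + card C'"
  proof -
    have "nbr E V c \<subseteq> A \<union> ?I \<union> C'" unfolding A_def by auto
    then have "card (nbr E V c) \<le> card (A \<union> ?I \<union> C')"
      by (intro card_mono) (use finA insert.hyps(1) finite_kP3_verts in auto)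
    also have "\<dots> \<le> card (A \<union> ?I) + card C'" by (rule card_Un_le)
    also have "\<dots> \<le> card A + card ?I + card C'" using card_Un_le[of A ?I] by simp
    finally show ?thesis .
  qed
  moreover have "3 * (j + card (insert c C')) \<le> card (nbr E V c) + 1" using insert.prems(3) by auto
  ultimately have "card A \<ge> 2" using cI insert.hyps by simp
  then obtain a b where ab: "a \<in> A" "b \<in> A" "a \<noteq> b" using two_elems[OF finA] by blast
  have cn: "c \<notin> nbr E V c" using nbr_self[OF simp] .
  have emb1: "emb E (V - C') j f" using emb_mono[OF insert.prems(2)] by auto
  have cnot: "c \<notin> ?I" using insert.prems(2) unfolding emb_def by auto
  have cV: "c \<in> V - C'" using insert.prems insert.hyps by auto
  have ed: "{c,a} \<in> E" "{c,b} \<in> E" using ab unfolding A_def nbr_def by auto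
  have abV: "a \<in> V - C'" "b \<in> V - C'" using ab unfolding A_def nbr_def by auto
  have ac: "a \<noteq> c" "b \<noteq> c" using ab cn unfolding A_def by auto
  have e2: "emb E (V - C') (Suc j) (f((j,0) := a, (j,1) := c, (j,2) := b))"
  proof (rule emb_ext[OF emb1 abV(1) abV(2) cV])
    show "a \<notin> ?I" "b \<notin> ?I" using ab unfolding A_def by auto
    show "c \<notin> ?I" by (rule cnot)
    show "a \<noteq> b" "a \<noteq> c" "b \<noteq> c" using ab(3) ac by auto
    show "{c,a} \<in> E" "{c,b} \<in> E" using ed by auto
  qed
  have "\<forall>c\<in>C'. 3 * (Suc j + card C') \<le> card (nbr E V c) + 1"
    using insert.prems(3) insert.hyps by auto
  moreover have "C' \<subseteq> V" using insert.prems(1) by auto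
  ultimately obtain g where "emb E V (Suc j + card C') g"
    using insert.IH[OF _ e2] by blast
  then show ?case using insert.hyps by auto
qed


lemma adj_sum:
  assumes "finite V"
  shows "(\<Sum>u\<in>V. adj E v u * x u) = (\<Sum>u\<in>nbr E V v. x u)"
proof -
  have "(\<Sum>u\<in>nbr E V v. x u) = (\<Sum>u\<in>V. if {v,u} \<in> E then x u else 0)"
    unfolding nbr_def using assms by (rule sum.inter_filter)
  also have "\<dots> = (\<Sum>u\<in>V. adj E v u * x u)" unfolding adj_def by (rule sum.cong) auto
  finally show ?thesis by simp
qed

lemma iso_eig_sub:
  assumes iso: "graph_iso V E W F" and finV: "finite V"
  shows "adj_eigenvalues V E \<subseteq> adj_eigenvalues W F"
proof
  fix mu assume "mu \<in> adj_eigenvalues V E"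
  then obtain x v0 where x: "v0 \<in> V" "x v0 \<noteq> 0" "\<forall>v\<in>V. (\<Sum>u\<in>V. adj E v u * x u) = mu * x v"
    unfolding adj_eigenvalues_def mem_Collect_eq by blast
  obtain f where f: "bij_betw f V W" "\<forall>u\<in>V. \<forall>v\<in>V. {u, v} \<in> E \<longleftrightarrow> {f u, f v} \<in> F"
    using iso unfolding graph_iso_def by blast
  define g where "g = inv_into V f"
  define y where "y = (\<lambda>w. x (g w))"
  have gf: "g (f v) = v" if "v \<in> V" for v
    unfolding g_def using f(1) that by (simp add: bij_betw_inv_into_left)
  have adjf: "adj F (f v) (f u) = adj E v u" if "v \<in> V" "u \<in> V" for u v
    unfolding adj_def using f(2) that by simp
  have ev: "(\<Sum>w\<in>W. adj F w' w * y w) = mu * y w'" if w': "w' \<in> W" for w'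
  proof -
    obtain v where v: "v \<in> V" "w' = f v" using f(1) w' unfolding bij_betw_def by auto
    have "(\<Sum>w\<in>W. adj F w' w * y w) = (\<Sum>u\<in>V. adj F w' (f u) * y (f u))"
      using sum.reindex_bij_betw[OF f(1), of "\<lambda>w. adj F w' w * y w"] by simp
    also have "\<dots> = (\<Sum>u\<in>V. adj E v u * x u)"
      by (rule sum.cong) (auto simp: v adjf y_def gf)
    also have "\<dots> = mu * y w'" using x(3) v by (simp add: y_def gf)
    finally show ?thesis .
  qed
  have "f v0 \<in> W" "y (f v0) \<noteq> 0" using f(1) x(1,2) by (auto simp: y_def gf bij_betw_def)
  then show "mu \<in> adj_eigenvalues W F" unfolding adj_eigenvalues_def using ev by blast
qed

lemma iso_sym:
  assumes "graph_iso V E W F" shows "graph_iso W F V E"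
proof -
  obtain f where f: "bij_betw f V W" "\<forall>u\<in>V. \<forall>v\<in>V. {u, v} \<in> E \<longleftrightarrow> {f u, f v} \<in> F"
    using assms unfolding graph_iso_def by blast
  define g where "g = inv_into V f"
  have g: "bij_betw g W V" unfolding g_def by (rule bij_betw_inv_into[OF f(1)])
  have fg: "f (g w) = w" if "w \<in> W" for w
    unfolding g_def using f(1) that by (simp add: bij_betw_inv_into_right)
  have "\<forall>u\<in>W. \<forall>v\<in>W. {u, v} \<in> F \<longleftrightarrow> {g u, g v} \<in> E"
  proof (intro ballI)
    fix u v assume uv: "u \<in> W" "v \<in> W"
    then have "g u \<in> V" "g v \<in> V" using g by (auto simp: bij_betw_def)
    then show "{u, v} \<in> F \<longleftrightarrow> {g u, g v} \<in> E" using f(2) fg uv by metis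
  qed
  then show ?thesis unfolding graph_iso_def using g by blast
qed

lemma iso_spec:
  assumes "graph_iso V E W F" "finite V" "finite W"
  shows "spectral_radius V E = spectral_radius W F"
proof -
  have "adj_eigenvalues V E = adj_eigenvalues W F"
    using iso_eig_sub[OF assms(1,2)] iso_eig_sub[OF iso_sym[OF assms(1)] assms(3)] by blast
  then show ?thesis unfolding spectral_radius_def by simp
qed


lemma adj_mono: "E \<subseteq> E' \<Longrightarrow> adj E u v \<le> adj E' u v"
  unfolding adj_def by auto

lemma Nf_eigen_Q:
  assumes "\<forall>w\<in>V. (\<Sum>u\<in>V. adj E w u * x u) = r * x w" "Nf V x = 1"
  shows "Qf V (adj E) x = r"
  using Qf_eigen[OF assms(1)] assms(2) by simp

lemma sup_mono_strict:
  assumes fin: "finite V" and ne: "V \<noteq> {}" and sub: "E \<subseteq> E'"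
    and c: "c \<in> V" "\<forall>w\<in>V. w \<noteq> c \<longrightarrow> {c, w} \<in> E'"
  shows "spectral_radius V E \<le> spectral_radius V E'"
    and "spectral_radius V E = spectral_radius V E' \<Longrightarrow>
         \<forall>u\<in>V. \<forall>v\<in>V. u \<noteq> v \<longrightarrow> {u, v} \<in> E' \<longrightarrow> {u, v} \<in> E"
proof -
  obtain x where x: "\<forall>v. x v \<ge> 0" "Nf V x = 1"
    "\<forall>w\<in>V. (\<Sum>u\<in>V. adj E w u * x u) = spectral_radius V E * x w"
    using spec_rad(2)[OF fin ne, of E] by blast
  have q: "Qf V (adj E) x = spectral_radius V E" by (rule Nf_eigen_Q[OF x(3,2)])
  have qq: "Qf V (adj E) x \<le> Qf V (adj E') x" unfolding Qf_def
    by (intro sum_mono) (simp add: x(1) adj_mono[OF sub] mult_right_mono)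
  have le': "Qf V (adj E') x \<le> spectral_radius V E'"
    using spec_rad(1)[OF fin ne, of E'] x(2) by (metis mult.right_neutral)
  show "spectral_radius V E \<le> spectral_radius V E'" using q qq le' by simp
  assume eq: "spectral_radius V E = spectral_radius V E'"
  have q': "Qf V (adj E') x = spectral_radius V E'" using q qq le' eq by simp
  have ev': "\<forall>w\<in>V. (\<Sum>u\<in>V. adj E' w u * x u) = spectral_radius V E' * x w"
    by (rule variational[OF symm_adj fin spec_rad(1)[OF fin ne] x(2) q'])
  have zero: "x v = 0" if uv: "u \<in> V" "v \<in> V" "{u, v} \<in> E'" "{u, v} \<notin> E" for u v
  proof -
    have "(\<Sum>w\<in>V. (adj E' u w - adj E u w) * x w) =
          (\<Sum>w\<in>V. adj E' u w * x w) - (\<Sum>w\<in>V. adj E u w * x w)"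
      by (simp add: left_diff_distrib sum_subtractf)
    also have "\<dots> = 0"
    proof -
      have a1: "(\<Sum>w\<in>V. adj E' u w * x w) = spectral_radius V E' * x u" using ev' uv(1) by blast
      have a2: "(\<Sum>w\<in>V. adj E u w * x w) = spectral_radius V E * x u" using x(3) uv(1) by blast
      show ?thesis unfolding a1 a2 eq by simp
    qed
    finally have "(\<Sum>w\<in>V. (adj E' u w - adj E u w) * x w) = 0" .
    moreover have nn: "\<And>w. w \<in> V \<Longrightarrow> (adj E' u w - adj E u w) * x w \<ge> 0"
      using adj_mono[OF sub] x(1) by simp
    ultimately have "\<forall>w\<in>V. (adj E' u w - adj E u w) * x w = 0"
      using sum_nonneg_eq_0_iff[OF fin nn] by simp
    then have "(adj E' u v - adj E u v) * x v = 0" using uv by blast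
    then show ?thesis using uv unfolding adj_def by simp
  qed
  have spread: "x w = 0" if "w \<in> V" "x v = 0" "v \<in> V" "{v, w} \<in> E'" for v w
  proof -
    have "(\<Sum>u\<in>V. adj E' v u * x u) = spectral_radius V E' * x v" using ev' that(3) by blast
    then have "(\<Sum>u\<in>V. adj E' v u * x u) = 0" using that(2) by simp
    moreover have nn: "\<And>u. u \<in> V \<Longrightarrow> adj E' v u * x u \<ge> 0"
      by (rule mult_nonneg_nonneg[OF adj_nonneg x(1)[rule_format]])
    ultimately have "\<forall>u\<in>V. adj E' v u * x u = 0" using sum_nonneg_eq_0_iff[OF fin nn] by simp
    then show ?thesis using that unfolding adj_def by auto
  qed
  show "\<forall>u\<in>V. \<forall>v\<in>V. u \<noteq> v \<longrightarrow> {u, v} \<in> E' \<longrightarrow> {u, v} \<in> E"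
  proof (intro ballI impI, rule ccontr)
    fix u v assume uv: "u \<in> V" "v \<in> V" "u \<noteq> v" "{u, v} \<in> E'" "{u, v} \<notin> E"
    have xv: "x v = 0" using zero uv by blast
    have xc: "x c = 0"
    proof (cases "v = c")
      case True then show ?thesis using xv by simp
    next
      case False
      then have "{c, v} \<in> E'" using c uv by blast
      then have "{v, c} \<in> E'" by (simp add: insert_commute)
      then show ?thesis using spread[OF c(1) xv uv(2)] by blast
    qed
    have "\<forall>w\<in>V. x w = 0"
    proof
      fix w assume w: "w \<in> V"
      show "x w = 0"
      proof (cases "w = c")
        case True then show ?thesis using xc by simp
      next
        case False then show ?thesis using spread[OF w xc c(1)] c(2) w by blast
      qed
    qed
    then have "Nf V x = 0" unfolding Nf_def by simp
    then show False using x(2) by simp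
  qed
qed


lemma bij_shift: "bij_betw (\<lambda>i. b + i) {0..<c} {b..<b + (c::nat)}"
  unfolding bij_betw_def inj_on_def
proof (intro conjI)
  show "(\<lambda>i. b + i) ` {0..<c} = {b..<b + c}"
  proof
    show "(\<lambda>i. b + i) ` {0..<c} \<subseteq> {b..<b + c}" by auto
    show "{b..<b + c} \<subseteq> (\<lambda>i. b + i) ` {0..<c}"
    proof
      fix x assume "x \<in> {b..<b + c}"
      then have "x = b + (x - b)" "x - b \<in> {0..<c}" by auto
      then show "x \<in> (\<lambda>i. b + i) ` {0..<c}" by (metis imageI)
    qed
  qed
qed auto

lemma pairing:
  assumes "finite R"
    and deg1: "\<forall>u\<in>R. \<forall>a\<in>R. \<forall>c\<in>R. {u,a} \<in> E \<longrightarrow> {u,c} \<in> E \<longrightarrow> a = c"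
    and simp: "\<forall>e\<in>E. card e = 2"
  shows "\<exists>g. bij_betw g R {b..<b + card R} \<and>
           (\<forall>u\<in>R. \<forall>w\<in>R. {u,w} \<in> E \<longrightarrow> (g u - b) div 2 = (g w - b) div 2)"
  using assms(1,2)
proof (induction "card R" arbitrary: R b rule: less_induct)
  case less
  show ?case
  proof (cases "\<exists>u\<in>R. \<exists>w\<in>R. {u,w} \<in> E")
    case False
    obtain h where h: "bij_betw h R {0..<card R}" using ex_bij_betw_finite_nat[OF less.prems(1)] by blast
    have "bij_betw ((\<lambda>i. b + i) \<circ> h) R {b..<b + card R}"
      by (rule bij_betw_trans[OF h bij_shift])
    then show ?thesis using False by blast
  next
    case True
    then obtain u w where uw: "u \<in> R" "w \<in> R" "{u,w} \<in> E" by blast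
    have "card {u,w} = 2" using simp uw by blast
    then have uw': "u \<noteq> w"
    proof -
      assume c2: "card {u,w} = 2"
      show "u \<noteq> w"
      proof
        assume "u = w"
        then have "card {u,w} = 1" by simp
        then show False using c2 by simp
      qed
    qed
    define R' where "R' = R - {u,w}"
    have finR': "finite R'" using less.prems(1) unfolding R'_def by auto
    have cR: "card R = card R' + 2"
    proof -
      have "card R' = card R - card {u,w}" unfolding R'_def
        using uw less.prems(1) by (intro card_Diff_subset) auto
      moreover have "card {u,w} \<le> card R" using uw less.prems(1) by (intro card_mono) auto
      ultimately show ?thesis using uw' by simp
    qed
    have d1': "\<forall>x\<in>R'. \<forall>a\<in>R'. \<forall>c\<in>R'. {x,a} \<in> E \<longrightarrow> {x,c} \<in> E \<longrightarrow> a = c"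
      using less.prems(2) unfolding R'_def by blast
    obtain g' where g': "bij_betw g' R' {b+2..<b+2 + card R'}"
      "\<forall>x\<in>R'. \<forall>y\<in>R'. {x,y} \<in> E \<longrightarrow> (g' x - (b+2)) div 2 = (g' y - (b+2)) div 2"
      using less.hyps[of R' "b+2"] finR' d1' cR by auto
    define g where "g x = (if x = u then b else if x = w then b + 1 else g' x)" for x
    have b1: "bij_betw g {u,w} {b, b+1}" unfolding g_def bij_betw_def inj_on_def using uw' by auto
    have b2: "bij_betw g R' {b+2..<b+2 + card R'}"
    proof -
      have "bij_betw g R' {b+2..<b+2 + card R'} = bij_betw g' R' {b+2..<b+2 + card R'}"
        by (rule bij_betw_cong) (auto simp: g_def R'_def)
      then show ?thesis using g'(1) by simp
    qed
    have b3: "bij_betw g ({u,w} \<union> R') ({b, b+1} \<union> {b+2..<b+2 + card R'})"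
      by (rule bij_betw_combine[OF b1 b2]) auto
    have "{u,w} \<union> R' = R" unfolding R'_def using uw by auto
    moreover have "{b, b+1} \<union> {b+2..<b+2 + card R'} = {b..<b + card R}" using cR by auto
    ultimately have bij: "bij_betw g R {b..<b + card R}" using b3 by simp
    have gR': "g x \<ge> b + 2" if "x \<in> R'" for x
      using g'(1) that unfolding bij_betw_def g_def R'_def by auto
    have edge: "(g x - b) div 2 = (g y - b) div 2" if xy: "x \<in> R" "y \<in> R" "{x,y} \<in> E" for x y
    proof -
      have nuw: "x \<notin> {u,w} \<Longrightarrow> y \<notin> {u,w}"
      proof
        assume x: "x \<notin> {u,w}" and y: "y \<in> {u,w}"
        then show False
        proof (cases "y = u")
          case True
          then have "{u,x} \<in> E" using xy by (simp add: insert_commute)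
          then have "x = w" using less.prems(2) uw xy by blast
          then show False using x by simp
        next
          case False
          then have yw: "y = w" using y by simp
          then have "{w,x} \<in> E" "{w,u} \<in> E" using xy uw by (auto simp: insert_commute)
          then have "x = u" using less.prems(2) uw xy by blast
          then show False using x by simp
        qed
      qed
      have xy_ne: "x \<noteq> y" using simp xy(3) by fastforce
      show ?thesis
      proof (cases "x \<in> {u,w}")
        case True
        have "y \<in> {u,w}"
        proof (rule ccontr)
          assume y: "y \<notin> {u,w}"
          have "{y,x} \<in> E" using xy by (simp add: insert_commute)
          from nuw[of] show False
          proof (cases "x = u")
            case True
            then have "{u,y} \<in> E" using xy by simp
            then have "y = w" using less.prems(2) uw xy by blast
            then show False using y by simp
          next
            case False
            then have "x = w" using \<open>x \<in> {u,w}\<close> by simp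
            then have "{w,y} \<in> E" "{w,u} \<in> E" using xy uw by (auto simp: insert_commute)
            then have "y = u" using less.prems(2) uw xy by blast
            then show False using y by simp
          qed
        qed
        then show ?thesis using True by (auto simp: g_def)
      next
        case False
        then have "y \<notin> {u,w}" using nuw by blast
        then have "x \<in> R'" "y \<in> R'" using False xy unfolding R'_def by auto
        then have "(g' x - (b+2)) div 2 = (g' y - (b+2)) div 2" using g'(2) xy by blast
        moreover have "g x = g' x" "g y = g' y" using \<open>x \<in> R'\<close> \<open>y \<in> R'\<close> unfolding g_def R'_def by auto
        moreover have "g x \<ge> b + 2" "g y \<ge> b + 2" using gR' \<open>x \<in> R'\<close> \<open>y \<in> R'\<close> by auto
        ultimately show ?thesis
        proof -
          assume h: "(g' x - (b+2)) div 2 = (g' y - (b+2)) div 2" "g x = g' x" "g y = g' y"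
            "g x \<ge> b + 2" "g y \<ge> b + 2"
          have e1: "g x - b = (g' x - (b+2)) + 2" using h by simp
          have e2: "g y - b = (g' y - (b+2)) + 2" using h by simp
          show ?thesis unfolding e1 e2 using h(1) by simp
        qed
      qed
    qed
    show ?thesis using bij edge by blast
  qed
qed


lemma F_edge_ne: "{x, y} \<in> F_edges n k \<Longrightarrow> x \<noteq> y"
  unfolding F_edges_def by (auto simp: doubleton_eq_iff)

lemma F_edge_I:
  assumes "x < n" "y < n" "x \<noteq> y" "x < k - 1 \<or> y < k - 1 \<or> (x - (k - 1)) div 2 = (y - (k - 1)) div 2"
  shows "{x, y} \<in> F_edges n k"
  unfolding F_edges_def using assms by blast

lemma caseA:
  assumes sg: "simple_graph V E" and n: "card V = n" and k: "k \<ge> 2"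
    and L: "L \<subseteq> V" "card L = k - 1" and nk: "n \<ge> k"
    and deg1: "\<forall>u\<in>V - L. \<forall>a\<in>V - L. \<forall>c\<in>V - L. {u,a} \<in> E \<longrightarrow> {u,c} \<in> E \<longrightarrow> a = c"
  shows "spectral_radius V E \<le> spectral_radius (F_verts n) (F_edges n k) \<and>
         (spectral_radius V E = spectral_radius (F_verts n) (F_edges n k) \<longleftrightarrow>
          graph_iso V E (F_verts n) (F_edges n k))"
proof -
  have fin: "finite V" and ed: "\<forall>e\<in>E. e \<subseteq> V \<and> card e = 2" using sg unfolding simple_graph_def by auto
  have finL: "finite L" using finite_subset[OF L(1) fin] .
  define R where "R = V - L"
  have finR: "finite R" unfolding R_def using fin by auto
  have cR: "card R = n - (k - 1)" unfolding R_def using card_Diff_subset[OF finL L(1)] n L(2) by simp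
  obtain hL where hL: "bij_betw hL L {0..<k-1}" using ex_bij_betw_finite_nat[OF finL] L(2) by auto
  obtain g where g: "bij_betw g R {k-1..<k-1 + card R}"
    "\<forall>u\<in>R. \<forall>w\<in>R. {u,w} \<in> E \<longrightarrow> (g u - (k-1)) div 2 = (g w - (k-1)) div 2"
    using pairing[OF finR, of E "k-1"] deg1 ed unfolding R_def by auto
  have kn: "k - 1 + card R = n" using cR nk by simp
  define phi where "phi x = (if x \<in> L then hL x else g x)" for x
  have b1: "bij_betw phi L {0..<k-1}"
    using hL by (rule bij_betw_cong[THEN iffD1, rotated]) (simp add: phi_def)
  have b2: "bij_betw phi R {k-1..<n}"
  proof -
    have "bij_betw phi R {k-1..<n} = bij_betw g R {k-1..<n}"
      by (rule bij_betw_cong) (auto simp: phi_def R_def)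
    then show ?thesis using g(1) kn by simp
  qed
  have "bij_betw phi (L \<union> R) ({0..<k-1} \<union> {k-1..<n})"
    by (rule bij_betw_combine[OF b1 b2]) auto
  moreover have "L \<union> R = V" unfolding R_def using L(1) by auto
  moreover have "{0..<k-1} \<union> {k-1..<n} = {0..<n}" using nk by auto
  ultimately have phi: "bij_betw phi V {0..<n}" by simp
  have phiL: "phi x < k - 1" if "x \<in> L" for x using b1 that unfolding bij_betw_def by auto
  have phin: "phi x < n" if "x \<in> V" for x using phi that unfolding bij_betw_def by auto
  have phiinj: "phi x \<noteq> phi y" if "x \<in> V" "y \<in> V" "x \<noteq> y" for x y
    using phi that unfolding bij_betw_def inj_on_def by blast
  define E' where "E' = {{u,v} | u v. u \<in> V \<and> v \<in> V \<and> {phi u, phi v} \<in> F_edges n k}"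
  have isoE': "graph_iso V E' (F_verts n) (F_edges n k)"
    unfolding graph_iso_def F_verts_def
  proof (intro exI conjI ballI)
    show "bij_betw phi V {0..<n}" by (rule phi)
    fix u v assume uv: "u \<in> V" "v \<in> V"
    show "{u, v} \<in> E' \<longleftrightarrow> {phi u, phi v} \<in> F_edges n k"
    proof
      assume "{u, v} \<in> E'"
      then obtain u' v' where uv': "{u,v} = {u',v'}" "{phi u', phi v'} \<in> F_edges n k"
        unfolding E'_def by blast
      have "{phi u, phi v} = phi ` {u,v}" by simp
      also have "\<dots> = phi ` {u',v'}" using uv'(1) by simp
      also have "\<dots> = {phi u', phi v'}" by simp
      finally show "{phi u, phi v} \<in> F_edges n k" using uv'(2) by simp
    next
      assume "{phi u, phi v} \<in> F_edges n k"
      then show "{u, v} \<in> E'" unfolding E'_def using uv by blast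
    qed
  qed
  have sub: "E \<subseteq> E'"
  proof
    fix e assume e: "e \<in> E"
    then obtain u v where uv: "e = {u,v}" "u \<noteq> v" using ed by (meson card_2_iff)
    have uvV: "u \<in> V" "v \<in> V" using ed e uv by auto
    have "{phi u, phi v} \<in> F_edges n k"
    proof (rule F_edge_I)
      show "phi u < n" "phi v < n" using phin uvV by auto
      show "phi u \<noteq> phi v" using phiinj uvV uv by auto
      show "phi u < k - 1 \<or> phi v < k - 1 \<or> (phi u - (k - 1)) div 2 = (phi v - (k - 1)) div 2"
      proof (cases "u \<in> L \<or> v \<in> L")
        case True then show ?thesis using phiL by blast
      next
        case False
        then have "u \<in> R" "v \<in> R" using uvV unfolding R_def by auto
        moreover have "phi u = g u" "phi v = g v" using False unfolding phi_def by auto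
        ultimately show ?thesis using g(2) e uv by auto
      qed
    qed
    then show "e \<in> E'" unfolding E'_def using uv uvV by blast
  qed
  have n0: "0 < n" using nk k by simp
  define c where "c = inv_into V phi 0"
  have cV: "c \<in> V" and phic: "phi c = 0"
    using phi n0 unfolding c_def bij_betw_def by (auto intro: inv_into_into f_inv_into_f)
  have univ: "\<forall>w\<in>V. w \<noteq> c \<longrightarrow> {c, w} \<in> E'"
  proof (intro ballI impI)
    fix w assume w: "w \<in> V" "w \<noteq> c"
    have "phi w \<noteq> phi c" using phiinj w cV by blast
    then have "phi w \<noteq> 0" using phic by simp
    then have "{phi c, phi w} \<in> F_edges n k"
      by (intro F_edge_I) (use phic phin w cV k n0 in auto)
    then show "{c, w} \<in> E'" unfolding E'_def using w cV by blast
  qed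
  have ne: "V \<noteq> {}" using cV by auto
  have finF: "finite (F_verts n)" unfolding F_verts_def by simp
  have eqF: "spectral_radius V E' = spectral_radius (F_verts n) (F_edges n k)"
    by (rule iso_spec[OF isoE' fin finF])
  note ms = sup_mono_strict[OF fin ne sub cV univ]
  have le: "spectral_radius V E \<le> spectral_radius (F_verts n) (F_edges n k)" using ms(1) eqF by simp
  have iff: "spectral_radius V E = spectral_radius (F_verts n) (F_edges n k) \<longleftrightarrow>
          graph_iso V E (F_verts n) (F_edges n k)"
  proof
    assume eq: "spectral_radius V E = spectral_radius (F_verts n) (F_edges n k)"
    have bk: "\<forall>u\<in>V. \<forall>v\<in>V. u \<noteq> v \<longrightarrow> {u, v} \<in> E' \<longrightarrow> {u, v} \<in> E"
      using ms(2) eq eqF by simp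
    have "E' \<subseteq> E"
    proof
      fix e assume "e \<in> E'"
      then obtain u v where uv: "e = {u,v}" "u \<in> V" "v \<in> V" "{phi u, phi v} \<in> F_edges n k"
        unfolding E'_def by blast
      have "u \<noteq> v" using F_edge_ne[OF uv(4)] by auto
      then show "e \<in> E" using bk uv isoE' unfolding E'_def by blast
    qed
    then have "E = E'" using sub by blast
    then show "graph_iso V E (F_verts n) (F_edges n k)" using isoE' by simp
  next
    assume "graph_iso V E (F_verts n) (F_edges n k)"
    then show "spectral_radius V E = spectral_radius (F_verts n) (F_edges n k)"
      by (rule iso_spec[OF _ fin finF])
  qed
  show ?thesis using le iff by blast
qed


lemma F_lower:
  fixes a :: real
  assumes k: "k \<ge> 2" and nk: "n \<ge> k" and a: "a \<ge> 0"
  defines "y \<equiv> (\<lambda>u::nat. if u < k - 1 then a else 1)"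
  shows "Qf {0..<n} (adj (F_edges n k)) y \<ge>
           real (k-1) * (real (k-1) - 1) * a^2 + 2 * real (k-1) * real (n-(k-1)) * a"
    and "Nf {0..<n} y = real (k-1) * a^2 + real (n-(k-1))"
proof -
  define K where "K = k - 1"
  have K1: "K \<ge> 1" "K \<le> n" using k nk unfolding K_def by auto
  have yK: "y v = (if v < K then a else 1)" for v unfolding y_def K_def by simp
  have ynn: "y u \<ge> 0" for u unfolding y_def using a by simp
  have splitn: "(\<Sum>u\<in>{0..<n}. f u) = (\<Sum>u\<in>{0..<K}. f u) + (\<Sum>u\<in>{K..<n}. f u)" for f :: "nat \<Rightarrow> real"
    using sum.atLeastLessThan_concat[of 0 K n f] K1 by simp
  have cK: "card {K..<n} = n - K" by simp
  have sumy: "(\<Sum>v\<in>{0..<n}. y v) = real K * a + real (n - K)"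
    unfolding splitn by (simp add: yK)
  define T where "T u v = (if u \<noteq> v \<and> (u < K \<or> v < K) then y u * y v else 0)" for u v
  have le1: "T u v \<le> adj (F_edges n k) u v * y u * y v" if "u < n" "v < n" for u v
  proof (cases "u \<noteq> v \<and> (u < K \<or> v < K)")
    case True
    then have "{u, v} \<in> F_edges n k" unfolding F_edges_def K_def using that by blast
    then show ?thesis unfolding T_def adj_def using True by simp
  next
    case False
    then have "T u v = 0" unfolding T_def by auto
    moreover have "0 \<le> adj (F_edges n k) u v * y u * y v"
      using ynn[of u] ynn[of v] adj_nonneg[of "F_edges n k" u v] by simp
    ultimately show ?thesis by simp
  qed
  have inner1: "(\<Sum>v\<in>{0..<n}. T u v) = a * ((real K - 1) * a + real (n - K))" if u: "u < K" for u
  proof -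
    have "(\<Sum>v\<in>{0..<n}. T u v) = (\<Sum>v\<in>{0..<n}. if v \<noteq> u then a * y v else 0)"
      by (rule sum.cong) (use u in \<open>auto simp: T_def yK\<close>)
    also have "\<dots> = (\<Sum>v\<in>{v\<in>{0..<n}. v \<noteq> u}. a * y v)" by (rule sum.inter_filter[symmetric]) simp
    also have "{v\<in>{0..<n}. v \<noteq> u} = {0..<n} - {u}" by auto
    also have "(\<Sum>v\<in>{0..<n} - {u}. a * y v) = (\<Sum>v\<in>{0..<n}. a * y v) - a * y u"
      using u K1 by (simp add: sum_diff1)
    also have "\<dots> = a * (\<Sum>v\<in>{0..<n}. y v) - a * y u" by (simp add: sum_distrib_left)
    also have "\<dots> = a * (real K * a + real (n - K)) - a * a"
      unfolding sumy using u by (simp add: yK)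
    finally show ?thesis by (simp add: algebra_simps)
  qed
  have inner2: "(\<Sum>v\<in>{0..<n}. T u v) = real K * a" if u: "K \<le> u" for u
  proof -
    have "(\<Sum>v\<in>{0..<n}. T u v) = (\<Sum>v\<in>{0..<K}. T u v) + (\<Sum>v\<in>{K..<n}. T u v)" by (rule splitn)
    also have "(\<Sum>v\<in>{K..<n}. T u v) = 0" by (rule sum.neutral) (use u in \<open>auto simp: T_def\<close>)
    also have "(\<Sum>v\<in>{0..<K}. T u v) = (\<Sum>v\<in>{0..<K}. a)"
      by (rule sum.cong) (use u in \<open>auto simp: T_def yK\<close>)
    finally show ?thesis by simp
  qed
  have "(\<Sum>u\<in>{0..<n}. \<Sum>v\<in>{0..<n}. T u v) =
        (\<Sum>u\<in>{0..<K}. \<Sum>v\<in>{0..<n}. T u v) + (\<Sum>u\<in>{K..<n}. \<Sum>v\<in>{0..<n}. T u v)" by (rule splitn)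
  also have "\<dots> = real K * (a * ((real K - 1) * a + real (n - K))) + real (n - K) * (real K * a)"
    using inner1 inner2 by simp
  finally have Tval: "(\<Sum>u\<in>{0..<n}. \<Sum>v\<in>{0..<n}. T u v) =
     real K * (real K - 1) * a^2 + 2 * real K * real (n - K) * a"
    by (simp add: algebra_simps power2_eq_square)
  have "(\<Sum>u\<in>{0..<n}. \<Sum>v\<in>{0..<n}. T u v) \<le> Qf {0..<n} (adj (F_edges n k)) y"
    unfolding Qf_def by (intro sum_mono) (auto intro: le1)
  then show "Qf {0..<n} (adj (F_edges n k)) y \<ge>
           real (k-1) * (real (k-1) - 1) * a^2 + 2 * real (k-1) * real (n-(k-1)) * a"
    using Tval unfolding K_def by simp
  have "Nf {0..<n} y = (\<Sum>u\<in>{0..<K}. a^2) + (\<Sum>u\<in>{K..<n}. 1)"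
    unfolding Nf_def splitn by (intro arg_cong2[where f="(+)"] sum.cong) (auto simp: yK)
  then show "Nf {0..<n} y = real (k-1) * a^2 + real (n-(k-1))" unfolding K_def by simp
qed

lemma F_rho:
  assumes k: "k \<ge> 2" and nk: "n \<ge> k" and r: "r \<ge> spectral_radius (F_verts n) (F_edges n k)"
  shows "r \<ge> 1" and "r^2 - (real k - 2) * r \<ge> real (k-1) * real (n-(k-1))"
proof -
  have ne: "{0..<n} \<noteq> {}" using nk k by auto
  note bnd = spec_rad(1)[OF finite_atLeastLessThan ne, of "F_edges n k", unfolded F_verts_def[symmetric]]
  define K where "K = real (k-1)"
  define m where "m = real (n-(k-1))"
  have K1: "K \<ge> 1" unfolding K_def using k by simp
  have m1: "m \<ge> 1" unfolding m_def using nk k by simp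
  have rho_ge: "spectral_radius (F_verts n) (F_edges n k) * Nf {0..<n} y \<ge> Qf {0..<n} (adj (F_edges n k)) y" for y
    using bnd by (simp add: F_verts_def)
  define y1 where "y1 = (\<lambda>u::nat. if u < k - 1 then (1::real) else 1)"
  have Q1: "Qf {0..<n} (adj (F_edges n k)) y1 \<ge> K * (K - 1) * 1^2 + 2 * K * m * 1"
    and N1: "Nf {0..<n} y1 = K * 1^2 + m"
    using F_lower[OF k nk, of 1] unfolding y1_def K_def m_def by auto
  have "K * (K - 1) + 2 * K * m \<ge> K + m"
  proof -
    have "K * (K - 1) + 2 * K * m - (K + m) = (K - 1) * (K - 1) + (2 * K - 1) * m - 1"
      by (simp add: algebra_simps)
    moreover have "(2 * K - 1) * m \<ge> 1 * 1"
    proof (rule mult_mono)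
      show "1 \<le> 2 * K - 1" using K1 by simp
    qed (use m1 K1 in auto)
    moreover have "(K - 1) * (K - 1) \<ge> 0" by simp
    ultimately show ?thesis by linarith
  qed
  then have "spectral_radius (F_verts n) (F_edges n k) * (K + m) \<ge> K + m"
    using rho_ge[of y1] Q1 N1 by simp
  then have rF1: "spectral_radius (F_verts n) (F_edges n k) \<ge> 1" using K1 m1 by simp
  then show "r \<ge> 1" using r by simp
  show "r^2 - (real k - 2) * r \<ge> real (k-1) * real (n-(k-1))"
  proof (rule ccontr)
    assume "\<not> ?thesis"
    then have lt: "r^2 - (K - 1) * r < K * m" unfolding K_def m_def using k by (simp add: of_nat_diff)
    have r1: "r \<ge> 1" using r rF1 by simp
    define a where "a = r / K"
    have a0: "a \<ge> 0" unfolding a_def using r1 K1 by simp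
    have Ka: "K * a = r" unfolding a_def using K1 by simp
    define y where "y = (\<lambda>u::nat. if u < k - 1 then a else 1)"
    have Q: "Qf {0..<n} (adj (F_edges n k)) y \<ge> K * (K - 1) * a^2 + 2 * K * m * a"
      and N: "Nf {0..<n} y = K * a^2 + m"
      using F_lower[OF k nk a0] unfolding y_def K_def m_def by auto
    have e1: "K * (K - 1) * a^2 + 2 * K * m * a - r * (K * a^2 + m) = r * ((K - 1) * a + m - r * a)"
      unfolding Ka[symmetric] by (simp add: algebra_simps power2_eq_square)
    have e2: "(K - 1) * a + m - r * a = (K * m - r^2 + (K - 1) * r) / K"
      unfolding a_def using K1 by (simp add: field_simps power2_eq_square)
    have "(K * m - r^2 + (K - 1) * r) / K > 0" using lt K1 by simp
    then have "r * ((K - 1) * a + m - r * a) > 0" unfolding e2 using r1 by (intro mult_pos_pos) auto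
    then have "K * (K - 1) * a^2 + 2 * K * m * a - r * (K * a^2 + m) > 0" using e1 by simp
    then have "Qf {0..<n} (adj (F_edges n k)) y > r * Nf {0..<n} y" using Q N by simp
    moreover have "r * Nf {0..<n} y \<ge> spectral_radius (F_verts n) (F_edges n k) * Nf {0..<n} y"
      using r Nf_nonneg[of "{0..<n}" y] by (rule mult_right_mono)
    ultimately show False using rho_ge[of y] by simp
  qed
qed


lemma poly1:
  fixes k :: nat
  assumes "k \<ge> 3"
  shows "(real k - 1) * (8 * real k^2 - 4 * real k + 1) \<ge> (7 * real k - 10)^2"
proof -
  define t where "t = real k"
  have e: "(t - 1) * (8 * t^2 - 4 * t + 1) - (7 * t - 10)^2 = 8 * t^3 - 61 * t^2 + 145 * t - 101"
    by (simp add: algebra_simps power2_eq_square power3_eq_cube)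
  have "8 * t^3 - 61 * t^2 + 145 * t - 101 \<ge> 0"
  proof (cases "k \<ge> 8")
    case True
    then have T: "t \<ge> 8" unfolding t_def by simp
    have "t^3 = t * t^2" by (simp add: power3_eq_cube power2_eq_square)
    then have "8 * t^3 \<ge> 64 * t^2" using T by (simp add: mult_right_mono)
    moreover have "t^2 \<ge> 0" by simp
    ultimately show ?thesis using T by linarith
  next
    case False
    then have "k = 3 \<or> k = 4 \<or> k = 5 \<or> k = 6 \<or> k = 7" using assms by linarith
    then show ?thesis unfolding t_def by auto
  qed
  then show ?thesis using e unfolding t_def by linarith
qed

lemma poly2:
  fixes k :: nat
  assumes "k \<ge> 2"
  shows "(real k - 1) * (8 * real k^2 - 4 * real k + 1) > (3 * real k - 2)^2"
proof -
  define t where "t = real k"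
  have e: "(t - 1) * (8 * t^2 - 4 * t + 1) - (3 * t - 2)^2 = 8 * t^3 - 21 * t^2 + 17 * t - 5"
    by (simp add: algebra_simps power2_eq_square power3_eq_cube)
  have "8 * t^3 - 21 * t^2 + 17 * t - 5 > 0"
  proof (cases "k \<ge> 3")
    case True
    then have T: "t \<ge> 3" unfolding t_def by simp
    have "t^3 = t * t^2" by (simp add: power3_eq_cube power2_eq_square)
    then have "8 * t^3 \<ge> 24 * t^2" using T by (simp add: mult_right_mono)
    moreover have "t^2 \<ge> 0" by simp
    ultimately show ?thesis using T by linarith
  next
    case False
    then have "k = 2" using assms by linarith
    then show ?thesis unfolding t_def by simp
  qed
  then show ?thesis using e unfolding t_def by linarith
qed

lemma n_real:
  assumes k: "k \<ge> 1" and n: "n \<ge> 8 * k^2 - 3 * k"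
  shows "real n \<ge> 8 * real k^2 - 3 * real k" and "n \<ge> k"
proof -
  have "k \<le> k * k" by (rule le_square)
  then have le: "3 * k \<le> 8 * k^2" by (simp add: power2_eq_square)
  have "real (8 * k^2 - 3 * k) = 8 * real k^2 - 3 * real k" using le by (simp add: of_nat_diff)
  then show rn: "real n \<ge> 8 * real k^2 - 3 * real k" using n by (metis of_nat_le_iff)
  have "real k \<le> real k * real k" using \<open>k \<le> k * k\<close> by (metis of_nat_le_iff of_nat_mult)
  then have "real n \<ge> real k" using rn by (simp add: power2_eq_square)
  then show "n \<ge> k" by simp
qed

lemma r_big:
  fixes r :: real
  assumes k: "k \<ge> 2" and n: "n \<ge> 8 * k^2 - 3 * k" and r0: "r \<ge> 0"
    and low: "r^2 - (real k - 2) * r \<ge> real (k-1) * real (n-(k-1))"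
  shows "r > 3 * real k - 2" and "k \<ge> 3 \<Longrightarrow> r \<ge> 7 * real k - 10"
proof -
  have rn: "real n \<ge> 8 * real k^2 - 3 * real k" and nk: "n \<ge> k" using n_real[of k n] k n by auto
  have e: "real (k-1) * real (n-(k-1)) = (real k - 1) * (real n - real k + 1)"
    using k nk by (simp add: of_nat_diff)
  have "(real k - 2) * r \<ge> 0" using k r0 by simp
  then have r2: "r^2 \<ge> (real k - 1) * (real n - real k + 1)" using low e by linarith
  have "(real k - 1) * (real n - real k + 1) \<ge> (real k - 1) * (8 * real k^2 - 4 * real k + 1)"
    using rn k by (intro mult_left_mono) auto
  then have r2': "r^2 \<ge> (real k - 1) * (8 * real k^2 - 4 * real k + 1)" using r2 by linarith
  have "(3 * real k - 2)^2 < r^2" using poly2[OF k] r2' by linarith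
  then show "r > 3 * real k - 2" using r0 by (rule power_less_imp_less_base)
  assume k3: "k \<ge> 3"
  have "(7 * real k - 10)^2 \<le> r^2" using poly1[OF k3] r2' by linarith
  then show "r \<ge> 7 * real k - 10" using r0 by (rule power2_le_imp_le)
qed

lemma arith_final:
  fixes r S X :: real and k l n :: nat
  assumes k3: "k \<ge> 3" and l1: "1 \<le> l" and lk: "l \<le> k - 2" and n: "n \<ge> 8 * k^2 - 3 * k"
    and r0: "r \<ge> 0"
    and low: "r^2 - (real k - 2) * r \<ge> real (k-1) * real (n-(k-1))"
    and S0: "S \<ge> 0" and Sb: "S \<le> real n - real l + 6 * (real k - 2) * (3 * real k - 2)"
    and up: "r^2 \<le> (real l - 1) * r + real l * (real n - real l) + S * real l / (r - (3 * real k - 2))"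
  shows False
proof -
  define K where "K = real k"
  define N where "N = real n"
  define Lr where "Lr = real l"
  have K3: "K \<ge> 3" unfolding K_def using k3 by simp
  have L1: "Lr \<ge> 1" "Lr \<le> K - 2" unfolding Lr_def K_def using l1 lk k3 by auto
  have rn: "N \<ge> 8 * K^2 - 3 * K" and nk: "n \<ge> k" using n_real[of k n] k3 n unfolding N_def K_def by auto
  have e: "real (k-1) * real (n-(k-1)) = (K - 1) * (N - K + 1)"
    using k3 nk unfolding K_def N_def by (simp add: of_nat_diff)
  have r7: "r \<ge> 7 * K - 10" using r_big(2)[OF _ n r0 low k3] k3 unfolding K_def by simp
  define D where "D = r - (3 * K - 2)"
  have D4: "D \<ge> 4 * (K - 2)" unfolding D_def using r7 by simp
  have Dp: "D > 0" using D4 K3 by simp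
  have C: "N + 6 * (K - 2) * (3 * K - 2) \<le> 4 * (N - 2 * K + 3)"
  proof -
    have eq: "6 * (K - 2) * (3 * K - 2) = 18 * K^2 - 48 * K + 24" by (simp add: algebra_simps power2_eq_square)
    have "K^2 \<ge> 0" by simp
    then have "N + (18 * K^2 - 48 * K + 24) \<le> 4 * (N - 2 * K + 3)" using rn K3 by (smt (verit))
    then show ?thesis unfolding eq .
  qed
  have SL: "S * Lr \<le> (N + 6 * (K - 2) * (3 * K - 2)) * (K - 2)"
  proof (rule mult_mono)
    show "S \<le> N + 6 * (K - 2) * (3 * K - 2)" using Sb L1 unfolding N_def Lr_def K_def by linarith
    show "Lr \<le> K - 2" using L1 by simp
    show "0 \<le> N + 6 * (K - 2) * (3 * K - 2)" using K3 unfolding N_def by simp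
    show "0 \<le> Lr" using L1 by simp
  qed
  also have "\<dots> \<le> 4 * (N - 2 * K + 3) * (K - 2)" using C K3 by (intro mult_right_mono) auto
  also have "\<dots> \<le> (N - 2 * K + 3) * D"
  proof -
    have "N - 2 * K + 3 \<ge> 0" using rn K3 by (simp add: power2_eq_square) (smt (verit) mult_le_cancel_right1)
    then have "(N - 2 * K + 3) * (4 * (K - 2)) \<le> (N - 2 * K + 3) * D" using D4 by (intro mult_left_mono)
    then show ?thesis by (simp add: algebra_simps)
  qed
  finally have SLD: "S * Lr / D \<le> N - 2 * K + 3" using Dp by (simp add: divide_simps)
  have up': "r^2 \<le> (Lr - 1) * r + Lr * (N - Lr) + (N - 2 * K + 3)"
    using up SLD unfolding D_def Lr_def N_def K_def by linarith
  have low': "r^2 - (K - 2) * r \<ge> (K - 1) * (N - K + 1)" using low e unfolding K_def by simp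
  have fac: "(K - 1) * (N - K + 1) - Lr * (N - Lr) = (K - 1 - Lr) * (N - K + 1 - Lr)"
    by (simp add: algebra_simps)
  have Q: "N - K + 1 - Lr \<ge> N - 2 * K + 3" using L1 by simp
  have Q0: "N - 2 * K + 3 \<ge> 0" using rn K3 by (simp add: power2_eq_square) (smt (verit) mult_le_cancel_right1)
  have "(K - 1 - Lr) * (N - K + 1 - Lr) \<ge> 1 * (N - K + 1 - Lr)"
    using L1 Q Q0 by (intro mult_right_mono) auto
  then have p1: "(K - 1) * (N - K + 1) - Lr * (N - Lr) \<ge> N - 2 * K + 3" using fac Q by (smt (verit))
  have "(K - 1 - Lr) * r \<ge> 1 * r" using L1 r0 by (intro mult_right_mono) auto
  moreover have "r > 0" using r7 K3 by simp
  ultimately show False using up' low' p1 by (simp add: algebra_simps)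
qed


lemma card_nbr_Int:
  assumes "finite B" "B \<subseteq> V"
  shows "card (nbr E V u \<inter> B) = (\<Sum>t\<in>B. if {u,t} \<in> E then 1 else (0::nat))"
proof -
  have "nbr E V u \<inter> B = {t\<in>B. {u,t} \<in> E}" using assms(2) unfolding nbr_def by auto
  then have "card (nbr E V u \<inter> B) = (\<Sum>t\<in>{t\<in>B. {u,t} \<in> E}. 1)" by simp
  also have "\<dots> = (\<Sum>t\<in>B. if {u,t} \<in> E then 1 else (0::nat))"
    using assms(1) by (rule sum.inter_filter)
  finally show ?thesis .
qed

lemma dc:
  assumes "finite A" "finite B" "A \<subseteq> V" "B \<subseteq> V"
  shows "(\<Sum>u\<in>A. card (nbr E V u \<inter> B)) = (\<Sum>t\<in>B. card (nbr E V t \<inter> A))"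
proof -
  have "(\<Sum>u\<in>A. card (nbr E V u \<inter> B)) = (\<Sum>u\<in>A. \<Sum>t\<in>B. if {u,t} \<in> E then 1 else (0::nat))"
    using card_nbr_Int[OF assms(2,4)] by simp
  also have "\<dots> = (\<Sum>t\<in>B. \<Sum>u\<in>A. if {u,t} \<in> E then 1 else (0::nat))" by (rule sum.swap)
  also have "\<dots> = (\<Sum>t\<in>B. \<Sum>u\<in>A. if {t,u} \<in> E then 1 else (0::nat))" by (simp add: insert_commute)
  also have "\<dots> = (\<Sum>t\<in>B. card (nbr E V t \<inter> A))"
    using card_nbr_Int[OF assms(1,3)] by simp
  finally show ?thesis .
qed

lemma Sbound:
  assumes fin: "finite V" and simp: "\<forall>e\<in>E. card e = 2" and R: "R \<subseteq> V"
    and degR: "\<forall>u\<in>R. card (nbr E V u) \<le> Dg"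
    and noemb: "\<not> (\<exists>f. emb E R j0 f)"
  shows "(\<Sum>u\<in>R. card (nbr E V u \<inter> R)) \<le> card R + 6 * (j0 - 1) * Dg"
proof -
  have finR: "finite R" using finite_subset[OF R fin] .
  define J where "J = {j. j \<le> j0 \<and> (\<exists>f. emb E R j f)}"
  have finJ: "finite J" unfolding J_def by simp
  have J0: "0 \<in> J" unfolding J_def using emb_0 by blast
  define j where "j = Max J"
  have jJ: "j \<in> J" unfolding j_def using finJ J0 by (intro Max_in) auto
  then obtain f where f: "emb E R j f" and jj0: "j \<le> j0" unfolding J_def by blast
  have jlt: "j < j0" using jj0 f noemb by (cases "j = j0") auto
  have nosuc: "\<not> (\<exists>g. emb E R (Suc j) g)"
  proof
    assume "\<exists>g. emb E R (Suc j) g"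
    then have "Suc j \<in> J" unfolding J_def using jlt by auto
    then have "Suc j \<le> j" unfolding j_def using Max_ge[OF finJ] by blast
    then show False by simp
  qed
  define T where "T = f ` kP3_verts j"
  have TR: "T \<subseteq> R" using f unfolding emb_def T_def by auto
  have finT: "finite T" unfolding T_def by (simp add: finite_kP3_verts)
  have cT: "card T \<le> 3 * j" unfolding T_def by (rule card_emb_image)
  have TV: "T \<subseteq> V" "R - T \<subseteq> V" using TR R by auto
  have claim1: "card (nbr E V u \<inter> (R - T)) \<le> 1" if u: "u \<in> R - T" for u
  proof (rule ccontr)
    assume "\<not> ?thesis"
    then have "card (nbr E V u \<inter> (R - T)) \<ge> 2" by simp
    then obtain a b where ab: "a \<in> nbr E V u \<inter> (R - T)" "b \<in> nbr E V u \<inter> (R - T)" "a \<noteq> b"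
      using two_elems[of "nbr E V u \<inter> (R - T)"] finR by blast
    have un: "u \<notin> nbr E V u" by (rule nbr_self[OF simp])
    have "emb E R (Suc j) (f((j,0) := a, (j,1) := u, (j,2) := b))"
    proof (rule emb_ext[OF f])
      show "a \<in> R" "b \<in> R" "u \<in> R" using ab u by auto
      show "a \<notin> f ` kP3_verts j" "b \<notin> f ` kP3_verts j" "u \<notin> f ` kP3_verts j"
        using ab u unfolding T_def by auto
      show "a \<noteq> b" by (rule ab(3))
      show "a \<noteq> u" "b \<noteq> u" using ab un by auto
      show "{u, a} \<in> E" "{u, b} \<in> E" using ab unfolding nbr_def by auto
    qed
    then show False using nosuc by blast
  qed
  have dR: "card (nbr E V u \<inter> X) \<le> Dg" if "u \<in> R" "X \<subseteq> V" for u X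
  proof -
    have "card (nbr E V u \<inter> X) \<le> card (nbr E V u)"
      by (rule card_mono) (use finite_subset[OF nbr_sub fin] in auto)
    then show ?thesis using degR that by fastforce
  qed
  have s1: "(\<Sum>u\<in>T. card (nbr E V u \<inter> R)) \<le> card T * Dg"
  proof -
    have "(\<Sum>u\<in>T. card (nbr E V u \<inter> R)) \<le> (\<Sum>u\<in>T. Dg)"
      by (rule sum_mono) (use dR TR R in auto)
    then show ?thesis by simp
  qed
  have s2: "card (nbr E V u \<inter> R) \<le> 1 + card (nbr E V u \<inter> T)" if u: "u \<in> R - T" for u
  proof -
    have "nbr E V u \<inter> R = (nbr E V u \<inter> (R - T)) \<union> (nbr E V u \<inter> T)" using TR by auto
    then have "card (nbr E V u \<inter> R) \<le> card (nbr E V u \<inter> (R - T)) + card (nbr E V u \<inter> T)"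
      by (metis card_Un_le)
    then show ?thesis using claim1[OF u] by simp
  qed
  have s3: "(\<Sum>u\<in>R - T. card (nbr E V u \<inter> R)) \<le> card (R - T) + card T * Dg"
  proof -
    have "(\<Sum>u\<in>R - T. card (nbr E V u \<inter> R)) \<le> (\<Sum>u\<in>R - T. 1 + card (nbr E V u \<inter> T))"
      by (rule sum_mono) (rule s2)
    also have "\<dots> = card (R - T) + (\<Sum>u\<in>R - T. card (nbr E V u \<inter> T))"
      by (simp only: sum.distrib) simp
    also have "(\<Sum>u\<in>R - T. card (nbr E V u \<inter> T)) = (\<Sum>t\<in>T. card (nbr E V t \<inter> (R - T)))"
      by (rule dc) (use finR finT TV in auto)
    also have "\<dots> \<le> (\<Sum>t\<in>T. Dg)" by (rule sum_mono) (use dR TR TV in auto)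
    finally show ?thesis by simp
  qed
  have "(\<Sum>u\<in>R. card (nbr E V u \<inter> R)) = (\<Sum>u\<in>R - T. card (nbr E V u \<inter> R)) + (\<Sum>u\<in>T. card (nbr E V u \<inter> R))"
    by (rule sum.subset_diff[OF TR finR])
  also have "\<dots> \<le> card (R - T) + card T * Dg + card T * Dg" using s1 s3 by simp
  also have "\<dots> \<le> card R + (3 * j * Dg + 3 * j * Dg)"
  proof -
    have "card (R - T) \<le> card R" using finR by (simp add: card_Diff_subset TR finT)
    moreover have "card T * Dg \<le> 3 * j * Dg" using cT by (rule mult_right_mono) simp
    ultimately show ?thesis by linarith
  qed
  also have "\<dots> \<le> card R + 6 * (j0 - 1) * Dg"
  proof -
    have "j \<le> j0 - 1" using jlt by simp
    then have "6 * j * Dg \<le> 6 * (j0 - 1) * Dg" by simp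
    then show ?thesis by simp
  qed
  finally show ?thesis .
qed


lemma sum_le_card_max:
  fixes x :: "'a \<Rightarrow> real"
  assumes "finite A" "\<forall>u\<in>A. x u \<le> M"
  shows "(\<Sum>u\<in>A. x u) \<le> real (card A) * M"
  using sum_bounded_above[of A x M] assms by simp

lemma caseB:
  assumes sg: "simple_graph V E" and n: "card V = n" and k: "k \<ge> 2"
    and nbig: "n \<ge> 8 * k^2 - 3 * k"
    and Ldef: "L = {v\<in>V. 3 * k \<le> card (nbr E V v) + 1}"
    and lk: "card L \<le> k - 2"
    and noH: "\<not> (\<exists>f. emb E (V - L) (k - card L) f)"
  shows "spectral_radius V E < spectral_radius (F_verts n) (F_edges n k)"
proof (rule ccontr)
  assume "\<not> ?thesis"
  then have rF: "spectral_radius (F_verts n) (F_edges n k) \<le> spectral_radius V E" by simp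
  define r where "r = spectral_radius V E"
  have fin: "finite V" and ed: "\<forall>e\<in>E. e \<subseteq> V \<and> card e = 2" using sg unfolding simple_graph_def by auto
  have simp2: "\<forall>e\<in>E. card e = 2" using ed by blast
  have nk: "n \<ge> k" using n_real[of k n] k nbig by auto
  have r1: "r \<ge> 1" and low: "r^2 - (real k - 2) * r \<ge> real (k-1) * real (n-(k-1))"
    using F_rho[OF k nk, of r] rF unfolding r_def by auto
  have r0: "r \<ge> 0" using r1 by simp
  have r3: "r > 3 * real k - 2" using r_big(1)[OF k nbig r0 low] .
  have ne: "V \<noteq> {}" using n nk k by auto
  obtain x where x: "\<forall>v. x v \<ge> 0" "Nf V x = 1"
    "\<forall>w\<in>V. (\<Sum>u\<in>V. adj E w u * x u) = r * x w"
    using spec_rad(2)[OF fin ne, of E] unfolding r_def by blast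
  have eig: "(\<Sum>u\<in>nbr E V w. x u) = r * x w" if "w \<in> V" for w
    using x(3) that adj_sum[OF fin] by metis
  obtain v0 where v0: "v0 \<in> V" "\<forall>v\<in>V. x v \<le> x v0"
  proof -
    have "Max (x ` V) \<in> x ` V" using fin ne by (intro Max_in) auto
    then obtain v0 where "v0 \<in> V" "x v0 = Max (x ` V)" by auto
    moreover have "\<forall>v\<in>V. x v \<le> Max (x ` V)" using fin by auto
    ultimately show ?thesis using that by auto
  qed
  define X where "X = x v0"
  have Xpos: "X > 0"
  proof (rule ccontr)
    assume "\<not> X > 0"
    then have "\<forall>v\<in>V. x v = 0" using v0 x(1) unfolding X_def by (smt (verit))
    then have "Nf V x = 0" unfolding Nf_def by simp
    then show False using x(2) by simp
  qed
  have finN: "finite (nbr E V u)" for u using finite_subset[OF nbr_sub fin] .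
  have sum_le_X: "(\<Sum>u\<in>A. x u) \<le> real (card A) * X" if "A \<subseteq> V" for A
    using sum_le_card_max[of A x X] that v0 finite_subset[OF that fin] unfolding X_def by auto
  show False
  proof (cases "v0 \<in> L")
    case False
    then have "card (nbr E V v0) + 1 < 3 * k" using v0 Ldef by auto
    then have dv: "real (card (nbr E V v0)) \<le> 3 * real k - 2" by linarith
    have "r * X = (\<Sum>u\<in>nbr E V v0. x u)" using eig[OF v0(1)] unfolding X_def by simp
    also have "\<dots> \<le> real (card (nbr E V v0)) * X" by (rule sum_le_X[OF nbr_sub])
    also have "\<dots> \<le> (3 * real k - 2) * X" using dv Xpos by (intro mult_right_mono) auto
    finally have "r \<le> 3 * real k - 2" using Xpos by simp
    then show False using r3 by simp
  next
    case True
    define l where "l = card L"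
    have finL: "finite L" unfolding Ldef using fin by simp
    have LV: "L \<subseteq> V" unfolding Ldef by auto
    have l1: "l \<ge> 1" unfolding l_def using True finL by (metis card_0_eq empty_iff less_one not_le)
    have k3: "k \<ge> 3" using l1 lk unfolding l_def by simp
    define R where "R = V - L"
    have finR: "finite R" unfolding R_def using fin by simp
    have RV: "R \<subseteq> V" unfolding R_def by auto
    have cR: "card R = n - l" unfolding R_def l_def using card_Diff_subset[OF finL LV] n by simp
    have Rne: "R \<noteq> {}" using cR lk nk k unfolding l_def by auto
    obtain w0 where w0: "w0 \<in> R" "\<forall>v\<in>R. x v \<le> x w0"
    proof -
      have "Max (x ` R) \<in> x ` R" using finR Rne by (intro Max_in) auto
      then obtain w0 where "w0 \<in> R" "x w0 = Max (x ` R)" by auto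
      moreover have "\<forall>v\<in>R. x v \<le> Max (x ` R)" using finR by auto
      ultimately show ?thesis using that by auto
    qed
    define eps where "eps = x w0"
    have eps0: "eps \<ge> 0" unfolding eps_def using x(1) by simp
    have degR: "card (nbr E V u) \<le> 3 * k - 2" if "u \<in> R" for u
      using that unfolding R_def Ldef by auto
    have split: "(\<Sum>w\<in>nbr E V u. x w) = (\<Sum>w\<in>nbr E V u \<inter> L. x w) + (\<Sum>w\<in>nbr E V u \<inter> R. x w)" for u
    proof -
      have "nbr E V u - L = nbr E V u \<inter> R" unfolding R_def using nbr_sub[of E V u] by blast
      then show ?thesis using sum.Int_Diff[OF finN, of x u L] by simp
    qed
    have partL: "(\<Sum>w\<in>nbr E V u \<inter> L. x w) \<le> real l * X" for u
    proof -
      have "(\<Sum>w\<in>nbr E V u \<inter> L. x w) \<le> real (card (nbr E V u \<inter> L)) * X"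
        by (rule sum_le_X) (use LV in auto)
      also have "\<dots> \<le> real l * X" unfolding l_def
        using Xpos card_mono[OF finL, of "nbr E V u \<inter> L"] by (intro mult_right_mono) auto
      finally show ?thesis .
    qed
    have partR: "(\<Sum>w\<in>nbr E V u \<inter> R. x w) \<le> real (card (nbr E V u \<inter> R)) * eps" for u
      using sum_le_card_max[of "nbr E V u \<inter> R" x eps] finN w0 unfolding eps_def by auto
    have nbd: "(\<Sum>w\<in>nbr E V u. x w) \<le> real l * X + real (card (nbr E V u \<inter> R)) * eps" for u
      using split partL partR by (smt (verit))
    define D where "D = r - (3 * real k - 2)"
    have Dp: "D > 0" unfolding D_def using r3 by simp
    have "r * eps \<le> real l * X + real (card (nbr E V w0 \<inter> R)) * eps"
      using eig[of w0] w0(1) RV nbd[of w0] unfolding eps_def by auto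
    moreover have "real (card (nbr E V w0 \<inter> R)) * eps \<le> (3 * real k - 2) * eps"
    proof (rule mult_right_mono)
      have "card (nbr E V w0 \<inter> R) \<le> card (nbr E V w0)" by (rule card_mono[OF finN]) auto
      then have "card (nbr E V w0 \<inter> R) \<le> 3 * k - 2" using degR[OF w0(1)] by simp
      then show "real (card (nbr E V w0 \<inter> R)) \<le> 3 * real k - 2" using k by linarith
    qed (rule eps0)
    ultimately have "D * eps \<le> real l * X" unfolding D_def by (simp add: algebra_simps)
    then have epsb: "eps \<le> real l * X / D" using Dp by (simp add: field_simps)
    define S where "S = real (\<Sum>u\<in>R. card (nbr E V u \<inter> R))"
    have S0: "S \<ge> 0" unfolding S_def by (simp only: of_nat_0_le_iff)
    have Snat: "(\<Sum>u\<in>R. card (nbr E V u \<inter> R)) \<le> card R + 6 * (k - l - 1) * (3 * k - 2)"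
      using Sbound[OF fin simp2 RV, of "3 * k - 2" "k - l"] degR noH unfolding R_def l_def by auto
    have Sb: "S \<le> real n - real l + 6 * (real k - 2) * (3 * real k - 2)"
    proof -
      have "(\<Sum>u\<in>R. card (nbr E V u \<inter> R)) \<le> (n - l) + 6 * (k - 2) * (3 * k - 2)"
      proof -
        have "k - l - 1 \<le> k - 2" using l1 by simp
        then have "6 * (k - l - 1) * (3 * k - 2) \<le> 6 * (k - 2) * (3 * k - 2)"
          by (intro mult_le_mono1) simp
        then show ?thesis using Snat cR by linarith
      qed
      then have "S \<le> real ((n - l) + 6 * (k - 2) * (3 * k - 2))" unfolding S_def by (simp only: of_nat_le_iff)
      moreover have "real ((n - l) + 6 * (k - 2) * (3 * k - 2)) = real n - real l + 6 * (real k - 2) * (3 * real k - 2)"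
        using lk nk k unfolding l_def by (simp add: of_nat_diff)
      ultimately show ?thesis by simp
    qed
    have sumR: "(\<Sum>u\<in>R. r * x u) \<le> real (card R) * (real l * X) + S * eps"
    proof -
      have "(\<Sum>u\<in>R. r * x u) = (\<Sum>u\<in>R. \<Sum>w\<in>nbr E V u. x w)" using eig RV by (intro sum.cong) auto
      also have "\<dots> \<le> (\<Sum>u\<in>R. real l * X + real (card (nbr E V u \<inter> R)) * eps)"
        by (rule sum_mono) (rule nbd)
      also have "\<dots> = real (card R) * (real l * X) + S * eps"
        unfolding S_def by (simp add: sum.distrib sum_distrib_right)
      finally show ?thesis .
    qed
    have v0n: "v0 \<notin> nbr E V v0" by (rule nbr_self[OF simp2])
    have cL: "card (nbr E V v0 \<inter> L) \<le> l - 1"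
    proof -
      have "nbr E V v0 \<inter> L \<subseteq> L - {v0}" using v0n by auto
      then have "card (nbr E V v0 \<inter> L) \<le> card (L - {v0})" by (intro card_mono) (use finL in auto)
      then show ?thesis using True finL unfolding l_def by simp
    qed
    have first: "(\<Sum>u\<in>nbr E V v0 \<inter> L. r * x u) \<le> (real l - 1) * (r * X)"
    proof -
      have "(\<Sum>u\<in>nbr E V v0 \<inter> L. r * x u) = r * (\<Sum>u\<in>nbr E V v0 \<inter> L. x u)" by (simp add: sum_distrib_left)
      also have "\<dots> \<le> r * (real (card (nbr E V v0 \<inter> L)) * X)"
        by (intro mult_left_mono sum_le_X) (use LV r0 in auto)
      also have "\<dots> \<le> r * ((real l - 1) * X)"
        using cL l1 Xpos r0 by (intro mult_left_mono mult_right_mono) auto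
      finally show ?thesis by (simp add: algebra_simps)
    qed
    have second: "(\<Sum>u\<in>nbr E V v0 - L. r * x u) \<le> (\<Sum>u\<in>R. r * x u)"
      by (rule sum_mono2[OF finR]) (use nbr_sub[of E V v0] x(1) r0 in \<open>auto simp: R_def\<close>)
    have "r * (r * X) = (\<Sum>u\<in>nbr E V v0. r * x u)"
      using eig[OF v0(1)] unfolding X_def by (simp add: sum_distrib_left[symmetric])
    also have "\<dots> = (\<Sum>u\<in>nbr E V v0 \<inter> L. r * x u) + (\<Sum>u\<in>nbr E V v0 - L. r * x u)"
      by (rule sum.Int_Diff[OF finN])
    finally have "r * (r * X) \<le> (real l - 1) * (r * X) + real (card R) * (real l * X) + S * eps"
      using first second sumR by linarith
    moreover have "S * eps \<le> S * (real l * X / D)" using epsb S0 by (rule mult_left_mono)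
    ultimately have "r * (r * X) \<le> ((real l - 1) * r + real (n - l) * real l + S * real l / D) * X"
      using cR by (simp add: algebra_simps)
    then have up0: "r * r \<le> (real l - 1) * r + real (n - l) * real l + S * real l / D"
      using Xpos by (simp add: mult.assoc[symmetric])
    have up: "r^2 \<le> (real l - 1) * r + real l * (real n - real l) + S * real l / (r - (3 * real k - 2))"
      using up0 nk lk k unfolding D_def l_def power2_eq_square by (simp add: of_nat_diff algebra_simps)
    show False
      by (rule arith_final[OF k3 l1 _ nbig r0 low S0 Sb up]) (use lk in \<open>simp add: l_def\<close>)
  qed
qed


theorem mainTheorem5:
  fixes V :: "'a set" and E :: "'a set set" and n k :: nat
  assumes "simple_graph V E"
    and "card V = n"
    and "k \<ge> 2"
    and "n \<ge> 8 * k^2 - 3 * k"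
    and "\<not> contains_subgraph V E (kP3_verts k) (kP3_edges k)"
  shows "spectral_radius V E \<le> spectral_radius (F_verts n) (F_edges n k) \<and>
         (spectral_radius V E = spectral_radius (F_verts n) (F_edges n k) \<longleftrightarrow>
          graph_iso V E (F_verts n) (F_edges n k))"
proof -
  note sg = assms(1) and n = assms(2) and k = assms(3) and nbig = assms(4)
  have fin: "finite V" and ed: "\<forall>e\<in>E. e \<subseteq> V \<and> card e = 2" using sg unfolding simple_graph_def by auto
  have simp2: "\<forall>e\<in>E. card e = 2" using ed by blast
  have nk: "n \<ge> k" using n_real[of k n] k nbig by auto
  have noK: "\<not> (\<exists>f. emb E V k f)" using assms(5) unfolding contains_subgraph_def emb_def by blast
  define L where "L = {v\<in>V. 3 * k \<le> card (nbr E V v) + 1}"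
  have LV: "L \<subseteq> V" unfolding L_def by auto
  have finL: "finite L" using finite_subset[OF LV fin] .
  have degL: "3 * k \<le> card (nbr E V v) + 1" if "v \<in> L" for v using that unfolding L_def by auto
  have K1: "card L \<le> k - 1"
  proof (rule ccontr)
    assume "\<not> ?thesis"
    then have "k \<le> card L" by simp
    then obtain C where C: "C \<subseteq> L" "card C = k" "finite C" by (rule obtain_subset_with_card_n)
    have "\<exists>g. emb E V (0 + card C) g"
    proof (rule greedy[OF fin simp2 C(3)])
      show "C \<subseteq> V" using C(1) LV by auto
      show "emb E (V - C) 0 (\<lambda>_. undefined)" by (rule emb_0)
      show "\<forall>c\<in>C. 3 * (0 + card C) \<le> card (nbr E V c) + 1" using C degL by auto
    qed
    then show False using noK C(2) by simp
  qed
  define l where "l = card L"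
  have K2: "\<not> (\<exists>f. emb E (V - L) (k - l) f)"
  proof
    assume "\<exists>f. emb E (V - L) (k - l) f"
    then obtain f where f: "emb E (V - L) (k - l) f" by blast
    have "\<exists>g. emb E V (k - l + card L) g"
    proof (rule greedy[OF fin simp2 finL LV f])
      show "\<forall>c\<in>L. 3 * (k - l + card L) \<le> card (nbr E V c) + 1" using degL K1 unfolding l_def by auto
    qed
    then show False using noK K1 unfolding l_def by auto
  qed
  have finF: "finite (F_verts n)" unfolding F_verts_def by simp
  show ?thesis
  proof (cases "l = k - 1")
    case True
    have deg1: "\<forall>u\<in>V - L. \<forall>a\<in>V - L. \<forall>c\<in>V - L. {u,a} \<in> E \<longrightarrow> {u,c} \<in> E \<longrightarrow> a = c"
    proof (intro ballI impI, rule ccontr)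
      fix u a c assume h: "u \<in> V - L" "a \<in> V - L" "c \<in> V - L" "{u,a} \<in> E" "{u,c} \<in> E" "a \<noteq> c"
      have au: "a \<noteq> u" "c \<noteq> u"
      proof -
        show "a \<noteq> u"
        proof
          assume "a = u" then have "card {u,a} = 1" by simp
          then show False using h(4) simp2 by fastforce
        qed
        show "c \<noteq> u"
        proof
          assume "c = u" then have "card {u,c} = 1" by simp
          then show False using h(5) simp2 by fastforce
        qed
      qed
      have "emb E (V - L) (Suc 0) ((\<lambda>_. undefined)((0,0) := a, (0,1) := u, (0,2) := c))"
        by (rule emb_ext[OF emb_0]) (use h au in \<open>auto simp: kP3_verts_def\<close>)
      then show False using K2 True k by auto
    qed
    show ?thesis
      by (rule caseA[OF sg n k LV _ nk deg1]) (use True l_def in simp)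
  next
    case False
    then have lk: "card L \<le> k - 2" using K1 unfolding l_def by simp
    have lt: "spectral_radius V E < spectral_radius (F_verts n) (F_edges n k)"
      by (rule caseB[OF sg n k nbig L_def lk]) (use K2 l_def in simp)
    have "\<not> graph_iso V E (F_verts n) (F_edges n k)"
      using iso_spec[OF _ fin finF] lt by fastforce
    then show ?thesis using lt by simp
  qed
qed


end
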